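(* Let $(G,X,\Gamma)$ be a $(\mu,\nu)$-path system group. Assume that $G$ contains a constricting element. Then either $G$ is virtually cyclic or $G$ contains a free subgroup of rank two.
   Context: A path in a metric space $X$ is a rectifiable continuous map $\alpha\colon[a,b]\to X$ parametrised by arc length; it is a $(\kappa,\lambda)$-quasi-geodesic if $d(\alpha(t),\alpha(t'))\le |t-t'|\le \kappa\, d(\alpha(t),\alpha(t'))+\lambda$ for all $t,t'$. A $(\mu,\nu)$-path system on a geodesic metric space $X$ is a collection $\Gamma$ of paths closed under subpaths, such that any two points are joined by an element of $\Gamma$ and every element of $\Gamma$ is a $(\mu,\nu)$-quasi-geodesic. A $(\mu,\nu)$-path system group $(G,X,\Gamma)$ is a group $G$ acting properly by isometries on a geodesic metric space $X$ (balls $B_G(x,r)=\{g: d(x,gx)\le r\}$ finite) with $\Gamma$ a $G$-invariant $(\mu,\nu)$-path system. A subset $A\subseteq X$ is $\delta$-constricting if there is $\pi_A\colon X\to A$ with (CS1) $d(x,\pi_A(x))\le\delta$ for $x\in A$, and (CS2) for all $x,y\in X$ and $\gamma\in\Gamma$ joining $x$ to $y$, if $d(\pi_A(x),\pi_A(y))>\delta$ then $\gamma$ meets $B_X(\pi_A(x),\delta)$ and $B_X(\pi_A(y),\delta)$. An element $g\in G$ is constricting if it has infinite order and for some $\delta\ge0$ there is a $\langle g\rangle$-invariant $\delta$-constricting subset $A$ on which $\langle g\rangle$ acts $\delta$-coboundedly (for all $a,a'\in A$ there is $k\in\langle g\rangle$ with $d(a,ka')\le\delta$). *)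

theory Defs
  imports "HOL-Analysis.Analysis" "HOL-Algebra.Algebra"
begin

text \<open>A path is represented as a triple (a, b, alpha), with domain the interval [a,b];
  values of alpha outside [a,b] are irrelevant.\<close>

type_synonym 'x rpath = "real \<times> real \<times> (real \<Rightarrow> 'x)"

definition partition_sums :: "(real \<Rightarrow> 'x::metric_space) \<Rightarrow> real \<Rightarrow> real \<Rightarrow> real set" where
  "partition_sums \<alpha> s t =
     {(\<Sum>i<n. dist (\<alpha> (p i)) (\<alpha> (p (Suc i)))) | p n.
        p 0 = s \<and> p n = t \<and> (\<forall>i<n. p i \<le> p (Suc i))}"

definition curve_length :: "(real \<Rightarrow> 'x::metric_space) \<Rightarrow> real \<Rightarrow> real \<Rightarrow> real" where
  "curve_length \<alpha> s t = Sup (partition_sums \<alpha> s t)"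

definition rectifiable_on :: "(real \<Rightarrow> 'x::metric_space) \<Rightarrow> real \<Rightarrow> real \<Rightarrow> bool" where
  "rectifiable_on \<alpha> a b \<longleftrightarrow> continuous_on {a..b} \<alpha> \<and> bdd_above (partition_sums \<alpha> a b)"

definition is_path :: "'x::metric_space rpath \<Rightarrow> bool" where
  "is_path \<gamma> \<longleftrightarrow> (case \<gamma> of (a, b, \<alpha>) \<Rightarrow>
     a \<le> b \<and> rectifiable_on \<alpha> a b \<and>
     (\<forall>s t. a \<le> s \<and> s \<le> t \<and> t \<le> b \<longrightarrow> curve_length \<alpha> s t = t - s))"

definition quasi_geodesic :: "real \<Rightarrow> real \<Rightarrow> 'x::metric_space rpath \<Rightarrow> bool" where
  "quasi_geodesic \<kappa> lam \<gamma> \<longleftrightarrow> (case \<gamma> of (a, b, \<alpha>) \<Rightarrow>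
     (\<forall>t\<in>{a..b}. \<forall>t'\<in>{a..b}.
        dist (\<alpha> t) (\<alpha> t') \<le> \<bar>t - t'\<bar> \<and> \<bar>t - t'\<bar> \<le> \<kappa> * dist (\<alpha> t) (\<alpha> t') + lam))"

text \<open>Membership in a path collection, up to the (irrelevant) values outside the domain.\<close>
definition in_paths :: "'x rpath set \<Rightarrow> 'x rpath \<Rightarrow> bool" where
  "in_paths \<Gamma> \<gamma> \<longleftrightarrow> (case \<gamma> of (a, b, \<alpha>) \<Rightarrow>
     (\<exists>\<beta>. (a, b, \<beta>) \<in> \<Gamma> \<and> (\<forall>t\<in>{a..b}. \<beta> t = \<alpha> t)))"

definition joins :: "'x rpath \<Rightarrow> 'x \<Rightarrow> 'x \<Rightarrow> bool" where
  "joins \<gamma> x y \<longleftrightarrow> (case \<gamma> of (a, b, \<alpha>) \<Rightarrow> \<alpha> a = x \<and> \<alpha> b = y)"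

definition geodesic_space :: "'x::metric_space itself \<Rightarrow> bool" where
  "geodesic_space _ \<longleftrightarrow> (\<forall>x y::'x. \<exists>\<alpha>. \<alpha> 0 = x \<and> \<alpha> (dist x y) = y \<and>
      (\<forall>s\<in>{0..dist x y}. \<forall>t\<in>{0..dist x y}. dist (\<alpha> s) (\<alpha> t) = \<bar>s - t\<bar>))"

definition path_system :: "real \<Rightarrow> real \<Rightarrow> 'x::metric_space rpath set \<Rightarrow> bool" where
  "path_system \<mu> \<nu> \<Gamma> \<longleftrightarrow>
     (\<forall>\<gamma>\<in>\<Gamma>. is_path \<gamma>) \<and>
     (\<forall>a b \<alpha> a' b'. (a, b, \<alpha>) \<in> \<Gamma> \<and> a \<le> a' \<and> a' \<le> b' \<and> b' \<le> b \<longrightarrow> in_paths \<Gamma> (a', b', \<alpha>)) \<and>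
     (\<forall>x y. \<exists>\<gamma>\<in>\<Gamma>. joins \<gamma> x y) \<and>
     (\<forall>\<gamma>\<in>\<Gamma>. quasi_geodesic \<mu> \<nu> \<gamma>)"

definition isometric_action :: "('g, 'm) monoid_scheme \<Rightarrow> ('g \<Rightarrow> 'x::metric_space \<Rightarrow> 'x) \<Rightarrow> bool" where
  "isometric_action G \<phi> \<longleftrightarrow>
     \<phi> \<one>\<^bsub>G\<^esub> = id \<and>
     (\<forall>g\<in>carrier G. \<forall>h\<in>carrier G. \<phi> (g \<otimes>\<^bsub>G\<^esub> h) = \<phi> g \<circ> \<phi> h) \<and>
     (\<forall>g\<in>carrier G. surj (\<phi> g) \<and> (\<forall>x y. dist (\<phi> g x) (\<phi> g y) = dist x y))"

definition proper_action :: "('g, 'm) monoid_scheme \<Rightarrow> ('g \<Rightarrow> 'x::metric_space \<Rightarrow> 'x) \<Rightarrow> bool" where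
  "proper_action G \<phi> \<longleftrightarrow> (\<forall>x r. finite {g \<in> carrier G. dist x (\<phi> g x) \<le> r})"

definition path_system_group ::
  "real \<Rightarrow> real \<Rightarrow> ('g, 'm) monoid_scheme \<Rightarrow> ('g \<Rightarrow> 'x::metric_space \<Rightarrow> 'x) \<Rightarrow> 'x rpath set \<Rightarrow> bool" where
  "path_system_group \<mu> \<nu> G \<phi> \<Gamma> \<longleftrightarrow>
     group G \<and> geodesic_space TYPE('x) \<and> isometric_action G \<phi> \<and> proper_action G \<phi> \<and>
     path_system \<mu> \<nu> \<Gamma> \<and>
     (\<forall>g\<in>carrier G. \<forall>a b \<alpha>. (a, b, \<alpha>) \<in> \<Gamma> \<longrightarrow> in_paths \<Gamma> (a, b, \<phi> g \<circ> \<alpha>))"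

definition constricting_map :: "'x::metric_space rpath set \<Rightarrow> real \<Rightarrow> 'x set \<Rightarrow> ('x \<Rightarrow> 'x) \<Rightarrow> bool" where
  "constricting_map \<Gamma> \<delta> A \<pi> \<longleftrightarrow>
     (\<forall>x. \<pi> x \<in> A) \<and>
     (\<forall>x\<in>A. dist x (\<pi> x) \<le> \<delta>) \<and>
     (\<forall>x y a b \<alpha>. (a, b, \<alpha>) \<in> \<Gamma> \<and> joins (a, b, \<alpha>) x y \<and> dist (\<pi> x) (\<pi> y) > \<delta> \<longrightarrow>
        (\<exists>t\<in>{a..b}. \<alpha> t \<in> cball (\<pi> x) \<delta>) \<and> (\<exists>t\<in>{a..b}. \<alpha> t \<in> cball (\<pi> y) \<delta>))"

definition constricting_set :: "'x::metric_space rpath set \<Rightarrow> real \<Rightarrow> 'x set \<Rightarrow> bool" where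
  "constricting_set \<Gamma> \<delta> A \<longleftrightarrow> (\<exists>\<pi>. constricting_map \<Gamma> \<delta> A \<pi>)"

definition infinite_order :: "('g, 'm) monoid_scheme \<Rightarrow> 'g \<Rightarrow> bool" where
  "infinite_order G g \<longleftrightarrow> (\<forall>n::nat. n \<ge> 1 \<longrightarrow> g [^]\<^bsub>G\<^esub> n \<noteq> \<one>\<^bsub>G\<^esub>)"

definition constricting_element ::
  "('g, 'm) monoid_scheme \<Rightarrow> ('g \<Rightarrow> 'x::metric_space \<Rightarrow> 'x) \<Rightarrow> 'x rpath set \<Rightarrow> 'g \<Rightarrow> bool" where
  "constricting_element G \<phi> \<Gamma> g \<longleftrightarrow> g \<in> carrier G \<and> infinite_order G g \<and>
     (\<exists>\<delta>\<ge>0. \<exists>A.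
        (\<forall>k\<in>generate G {g}. \<phi> k ` A \<subseteq> A) \<and>
        constricting_set \<Gamma> \<delta> A \<and>
        (\<forall>a\<in>A. \<forall>a'\<in>A. \<exists>k\<in>generate G {g}. dist a (\<phi> k a') \<le> \<delta>))"

definition virtually_cyclic :: "('g, 'm) monoid_scheme \<Rightarrow> bool" where
  "virtually_cyclic G \<longleftrightarrow>
     (\<exists>h\<in>carrier G. finite (rcosets\<^bsub>G\<^esub> (generate G {h})))"

text \<open>Words in the letters a, b and their inverses: a letter is (generator, exponent sign),
  with False = a, True = b, and the sign True = +1, False = -1.\<close>

definition letter_val :: "('g, 'm) monoid_scheme \<Rightarrow> 'g \<Rightarrow> 'g \<Rightarrow> bool \<times> bool \<Rightarrow> 'g" where
  "letter_val G a b l = (let x = (if fst l then b else a) in if snd l then x else inv\<^bsub>G\<^esub> x)"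

fun word_val :: "('g, 'm) monoid_scheme \<Rightarrow> 'g \<Rightarrow> 'g \<Rightarrow> (bool \<times> bool) list \<Rightarrow> 'g" where
  "word_val G a b [] = \<one>\<^bsub>G\<^esub>"
| "word_val G a b (l # w) = letter_val G a b l \<otimes>\<^bsub>G\<^esub> word_val G a b w"

definition reduced_word :: "(bool \<times> bool) list \<Rightarrow> bool" where
  "reduced_word w \<longleftrightarrow> (\<forall>i. Suc i < length w \<longrightarrow>
      \<not> (fst (w ! i) = fst (w ! Suc i) \<and> snd (w ! i) \<noteq> snd (w ! Suc i)))"

definition free_basis2 :: "('g, 'm) monoid_scheme \<Rightarrow> 'g \<Rightarrow> 'g \<Rightarrow> bool" where
  "free_basis2 G a b \<longleftrightarrow> a \<in> carrier G \<and> b \<in> carrier G \<and>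
     (\<forall>w. w \<noteq> [] \<and> reduced_word w \<longrightarrow> word_val G a b w \<noteq> \<one>\<^bsub>G\<^esub>)"

definition has_free_subgroup_rank2 :: "('g, 'm) monoid_scheme \<Rightarrow> bool" where
  "has_free_subgroup_rank2 G \<longleftrightarrow> (\<exists>a b. free_basis2 G a b)"

end

theory Submission
  imports Defs
begin


locale PSG =
  fixes mu nu :: real and G :: "('g, 'm) monoid_scheme"
    and phi :: "'g \<Rightarrow> 'x::metric_space \<Rightarrow> 'x" and Gam :: "'x rpath set"
  assumes psg: "path_system_group mu nu G phi Gam"
begin

definition K1 :: real where "K1 = max mu 1"

lemma K1_ge: "K1 \<ge> 1" unfolding K1_def by simp

lemma grp: "group G" using psg unfolding path_system_group_def by simp

lemma ps: "path_system mu nu Gam" using psg unfolding path_system_group_def by simp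

lemma act: "isometric_action G phi" using psg unfolding path_system_group_def by simp

lemma proper: "proper_action G phi" using psg unfolding path_system_group_def by simp

lemma inv_paths: "g \<in> carrier G \<Longrightarrow> (a, b, \<alpha>) \<in> Gam \<Longrightarrow> in_paths Gam (a, b, phi g \<circ> \<alpha>)"
  using psg unfolding path_system_group_def by blast

lemma QG0:
  assumes "(a,b,\<alpha>) \<in> Gam" "t \<in> {a..b}" "t' \<in> {a..b}"
  shows "dist (\<alpha> t) (\<alpha> t') \<le> \<bar>t - t'\<bar> \<and> \<bar>t - t'\<bar> \<le> mu * dist (\<alpha> t) (\<alpha> t') + nu"
proof -
  have "\<forall>\<gamma>\<in>Gam. quasi_geodesic mu nu \<gamma>" using ps unfolding path_system_def by (elim conjE)
  then have "quasi_geodesic mu nu (a,b,\<alpha>)" using assms(1) by (rule bspec)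
  then have "\<forall>t\<in>{a..b}. \<forall>t'\<in>{a..b}. dist (\<alpha> t) (\<alpha> t') \<le> \<bar>t - t'\<bar> \<and> \<bar>t - t'\<bar> \<le> mu * dist (\<alpha> t) (\<alpha> t') + nu"
    unfolding quasi_geodesic_def by simp
  then show ?thesis using assms(2,3) by blast
qed

lemma path_le: "(a,b,\<alpha>) \<in> Gam \<Longrightarrow> a \<le> b"
proof -
  assume a: "(a,b,\<alpha>) \<in> Gam"
  have "\<forall>\<gamma>\<in>Gam. is_path \<gamma>" using ps unfolding path_system_def by (elim conjE)
  then have "is_path (a,b,\<alpha>)" using a by (rule bspec)
  then show "a \<le> b" unfolding is_path_def by simp
qed

lemma path_exists: "\<exists>a b \<alpha>. (a,b,\<alpha>) \<in> Gam \<and> a \<le> b \<and> \<alpha> a = x \<and> \<alpha> b = y"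
proof -
  obtain \<gamma> where "\<gamma> \<in> Gam" "joins \<gamma> x y" using ps unfolding path_system_def by blast
  moreover obtain a b \<alpha> where "\<gamma> = (a,b,\<alpha>)" by (cases \<gamma>) auto
  ultimately have "(a,b,\<alpha>) \<in> Gam" "\<alpha> a = x" "\<alpha> b = y" unfolding joins_def by auto
  then show ?thesis using path_le by blast
qed

lemma nu_ge: "nu \<ge> 0"
proof -
  obtain a b \<alpha> where "(a,b,\<alpha>) \<in> Gam" "a \<le> b" using path_exists by blast
  from QG0[OF this(1), of a a] this(2) show ?thesis by simp
qed

lemma QG:
  assumes "(a,b,\<alpha>) \<in> Gam" "t \<in> {a..b}" "t' \<in> {a..b}"
  shows "dist (\<alpha> t) (\<alpha> t') \<le> \<bar>t - t'\<bar> \<and> \<bar>t - t'\<bar> \<le> K1 * dist (\<alpha> t) (\<alpha> t') + nu"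
proof -
  have "mu * dist (\<alpha> t) (\<alpha> t') \<le> K1 * dist (\<alpha> t) (\<alpha> t')"
    unfolding K1_def by (intro mult_right_mono) auto
  then show ?thesis using QG0[OF assms] by linarith
qed

lemma QG3:
  assumes "(a,b,\<alpha>) \<in> Gam" "a \<le> t1" "t1 \<le> s" "s \<le> t2" "t2 \<le> b"
  shows "dist (\<alpha> t1) (\<alpha> s) + dist (\<alpha> s) (\<alpha> t2) \<le> K1 * dist (\<alpha> t1) (\<alpha> t2) + nu"
proof -
  have "dist (\<alpha> t1) (\<alpha> s) \<le> s - t1" using QG[OF assms(1), of t1 s] assms by auto
  moreover have "dist (\<alpha> s) (\<alpha> t2) \<le> t2 - s" using QG[OF assms(1), of s t2] assms by auto
  moreover have "t2 - t1 \<le> K1 * dist (\<alpha> t1) (\<alpha> t2) + nu" using QG[OF assms(1), of t1 t2] assms by auto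
  ultimately show ?thesis by linarith
qed

lemma SUB:
  assumes "(a,b,\<alpha>) \<in> Gam" "a \<le> s" "s \<le> t" "t \<le> b"
  shows "\<exists>\<beta>. (s,t,\<beta>) \<in> Gam \<and> (\<forall>u\<in>{s..t}. \<beta> u = \<alpha> u)"
proof -
  have "in_paths Gam (s,t,\<alpha>)" using ps assms unfolding path_system_def by blast
  then show ?thesis unfolding in_paths_def by auto
qed

lemma cm_cs2:
  assumes "constricting_map Gam \<delta> B \<pi>" "(a,b,\<alpha>) \<in> Gam" "joins (a,b,\<alpha>) x y" "dist (\<pi> x) (\<pi> y) > \<delta>"
  shows "(\<exists>t\<in>{a..b}. \<alpha> t \<in> cball (\<pi> x) \<delta>) \<and> (\<exists>t\<in>{a..b}. \<alpha> t \<in> cball (\<pi> y) \<delta>)"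
proof -
  have H: "\<forall>x y a b \<alpha>. (a,b,\<alpha>) \<in> Gam \<and> joins (a,b,\<alpha>) x y \<and> dist (\<pi> x) (\<pi> y) > \<delta> \<longrightarrow> (\<exists>t\<in>{a..b}. \<alpha> t \<in> cball (\<pi> x) \<delta>) \<and> (\<exists>t\<in>{a..b}. \<alpha> t \<in> cball (\<pi> y) \<delta>)"
    using assms(1) unfolding constricting_map_def by (elim conjE)
  have H2: "(a,b,\<alpha>) \<in> Gam \<and> joins (a,b,\<alpha>) x y \<and> dist (\<pi> x) (\<pi> y) > \<delta> \<longrightarrow> (\<exists>t\<in>{a..b}. \<alpha> t \<in> cball (\<pi> x) \<delta>) \<and> (\<exists>t\<in>{a..b}. \<alpha> t \<in> cball (\<pi> y) \<delta>)"
    using H by (elim allE)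
  show ?thesis using H2 assms(2-4) by (elim impE) auto
qed

lemma pass:
  assumes cm: "constricting_map Gam \<delta> B \<pi>" and p: "(a,b,\<alpha>) \<in> Gam"
    and st: "a \<le> s" "s \<le> t" "t \<le> b" and far: "dist (\<pi> (\<alpha> s)) (\<pi> (\<alpha> t)) > \<delta>"
  shows "(\<exists>u\<in>{s..t}. dist (\<alpha> u) (\<pi> (\<alpha> s)) \<le> \<delta>) \<and> (\<exists>u\<in>{s..t}. dist (\<alpha> u) (\<pi> (\<alpha> t)) \<le> \<delta>)"
proof -
  obtain \<beta> where b: "(s,t,\<beta>) \<in> Gam" "\<forall>u\<in>{s..t}. \<beta> u = \<alpha> u" using SUB[OF p st] by blast
  have j: "joins (s,t,\<beta>) (\<alpha> s) (\<alpha> t)" using b(2) st unfolding joins_def by auto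
  have "(\<exists>u\<in>{s..t}. \<beta> u \<in> cball (\<pi> (\<alpha> s)) \<delta>) \<and> (\<exists>u\<in>{s..t}. \<beta> u \<in> cball (\<pi> (\<alpha> t)) \<delta>)"
    using cm_cs2[OF cm b(1) j far] .
  then show ?thesis using b(2) by (auto simp: dist_commute)
qed

lemma cm_in: assumes "constricting_map Gam \<delta> B \<pi>" shows "\<pi> x \<in> B"
proof -
  have "\<forall>x. \<pi> x \<in> B" using assms unfolding constricting_map_def by (rule conjunct1)
  then show ?thesis by simp
qed

lemma cm_near: assumes "constricting_map Gam \<delta> B \<pi>" "x \<in> B" shows "dist x (\<pi> x) \<le> \<delta>"
proof -
  have "\<forall>x\<in>B. dist x (\<pi> x) \<le> \<delta>" using assms(1) unfolding constricting_map_def by (elim conjE)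
  then show ?thesis using assms(2) by simp
qed

lemma lip:
  assumes cm: "constricting_map Gam \<delta> B \<pi>" and d: "\<delta> \<ge> 0"
  shows "dist (\<pi> x) (\<pi> y) \<le> K1 * dist x y + nu + 2*\<delta>"
proof (cases "dist (\<pi> x) (\<pi> y) > \<delta>")
  case False
  have "K1 * dist x y \<ge> 0" using K1_ge by simp
  then show ?thesis using False nu_ge d by linarith
next
  case True
  obtain a b \<alpha> where p: "(a,b,\<alpha>) \<in> Gam" "a \<le> b" "\<alpha> a = x" "\<alpha> b = y" using path_exists by blast
  have far: "dist (\<pi> (\<alpha> a)) (\<pi> (\<alpha> b)) > \<delta>" using True p(3,4) by simp
  have P: "(\<exists>u\<in>{a..b}. dist (\<alpha> u) (\<pi> (\<alpha> a)) \<le> \<delta>) \<and> (\<exists>u\<in>{a..b}. dist (\<alpha> u) (\<pi> (\<alpha> b)) \<le> \<delta>)"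
    by (rule pass[OF cm p(1) order_refl p(2) order_refl far])
  then obtain u1 u2 where u: "u1 \<in> {a..b}" "u2 \<in> {a..b}" "dist (\<alpha> u1) (\<pi> x) \<le> \<delta>" "dist (\<alpha> u2) (\<pi> y) \<le> \<delta>"
    unfolding p(3,4) by blast
  have "dist (\<alpha> u1) (\<alpha> u2) \<le> \<bar>u1 - u2\<bar>" using QG[OF p(1) u(1) u(2)] by blast
  moreover have "\<bar>u1 - u2\<bar> \<le> b - a" using u(1,2) by auto
  moreover have "b - a \<le> K1 * dist x y + nu" using QG[OF p(1), of a b] p by auto
  moreover have "dist (\<pi> x) (\<pi> y) \<le> dist (\<pi> x) (\<alpha> u1) + dist (\<alpha> u1) (\<pi> y)" by (rule dist_triangle)
  moreover have "dist (\<alpha> u1) (\<pi> y) \<le> dist (\<alpha> u1) (\<alpha> u2) + dist (\<alpha> u2) (\<pi> y)" by (rule dist_triangle)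
  moreover have "dist (\<pi> x) (\<alpha> u1) = dist (\<alpha> u1) (\<pi> x)" by (rule dist_commute)
  ultimately show ?thesis using u by linarith
qed

lemma K1_mono: "x \<le> y \<Longrightarrow> K1 * x \<le> K1 * y"
  using K1_ge by (intro mult_left_mono) auto

lemma K1_nonneg: "y \<ge> 0 \<Longrightarrow> K1 * y \<ge> 0"
  using K1_ge by simp

lemma phi_one: "phi \<one>\<^bsub>G\<^esub> x = x"
  using act unfolding isometric_action_def by simp

lemma phi_mult: "g \<in> carrier G \<Longrightarrow> h \<in> carrier G \<Longrightarrow> phi (g \<otimes>\<^bsub>G\<^esub> h) x = phi g (phi h x)"
  using act unfolding isometric_action_def by simp

lemma phi_dist: "g \<in> carrier G \<Longrightarrow> dist (phi g x) (phi g y) = dist x y"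
  using act unfolding isometric_action_def by simp

lemma phi_inv_l: "g \<in> carrier G \<Longrightarrow> phi (inv\<^bsub>G\<^esub> g) (phi g x) = x"
proof -
  assume g: "g \<in> carrier G"
  have "phi (inv\<^bsub>G\<^esub> g) (phi g x) = phi (inv\<^bsub>G\<^esub> g \<otimes>\<^bsub>G\<^esub> g) x"
    using g grp by (simp add: phi_mult group.inv_closed)
  also have "\<dots> = x" using g grp by (simp add: group.l_inv phi_one)
  finally show ?thesis .
qed

lemma phi_inv_r: "g \<in> carrier G \<Longrightarrow> phi g (phi (inv\<^bsub>G\<^esub> g) x) = x"
proof -
  assume g: "g \<in> carrier G"
  have "phi g (phi (inv\<^bsub>G\<^esub> g) x) = phi (g \<otimes>\<^bsub>G\<^esub> inv\<^bsub>G\<^esub> g) x"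
    using g grp by (simp add: phi_mult group.inv_closed)
  also have "\<dots> = x" using g grp by (simp add: group.r_inv phi_one)
  finally show ?thesis .
qed

lemma conj_map:
  assumes cm: "constricting_map Gam \<delta> B \<pi>" and h: "h \<in> carrier G"
  shows "constricting_map Gam \<delta> (phi h ` B) (\<lambda>x. phi h (\<pi> (phi (inv\<^bsub>G\<^esub> h) x)))"
proof -
  have P1: "\<forall>x. phi h (\<pi> (phi (inv\<^bsub>G\<^esub> h) x)) \<in> phi h ` B" using cm_in[OF cm] by blast
  have P2: "\<forall>x\<in>phi h ` B. dist x (phi h (\<pi> (phi (inv\<^bsub>G\<^esub> h) x))) \<le> \<delta>"
  proof
    fix x assume "x \<in> phi h ` B"
    then obtain a where a: "a \<in> B" "x = phi h a" by blast
    have "phi (inv\<^bsub>G\<^esub> h) x = a" using a phi_inv_l[OF h] by simp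
    then show "dist x (phi h (\<pi> (phi (inv\<^bsub>G\<^esub> h) x))) \<le> \<delta>"
      using a phi_dist[OF h] cm_near[OF cm a(1)] by simp
  qed
  have P3: "\<forall>x y a b \<alpha>. (a, b, \<alpha>) \<in> Gam \<and> joins (a, b, \<alpha>) x y \<and>
       dist (phi h (\<pi> (phi (inv\<^bsub>G\<^esub> h) x))) (phi h (\<pi> (phi (inv\<^bsub>G\<^esub> h) y))) > \<delta> \<longrightarrow>
       (\<exists>t\<in>{a..b}. \<alpha> t \<in> cball (phi h (\<pi> (phi (inv\<^bsub>G\<^esub> h) x))) \<delta>) \<and>
       (\<exists>t\<in>{a..b}. \<alpha> t \<in> cball (phi h (\<pi> (phi (inv\<^bsub>G\<^esub> h) y))) \<delta>)"
  proof (intro allI impI)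
    fix x y a b \<alpha>
    assume H: "(a, b, \<alpha>) \<in> Gam \<and> joins (a, b, \<alpha>) x y \<and>
         dist (phi h (\<pi> (phi (inv\<^bsub>G\<^esub> h) x))) (phi h (\<pi> (phi (inv\<^bsub>G\<^esub> h) y))) > \<delta>"
    have hi: "inv\<^bsub>G\<^esub> h \<in> carrier G" using h grp by (simp add: group.inv_closed)
    have "in_paths Gam (a, b, phi (inv\<^bsub>G\<^esub> h) \<circ> \<alpha>)" using inv_paths[OF hi] H by blast
    then obtain \<beta> where b: "(a,b,\<beta>) \<in> Gam" "\<forall>t\<in>{a..b}. \<beta> t = phi (inv\<^bsub>G\<^esub> h) (\<alpha> t)"
      unfolding in_paths_def by auto
    have ab: "a \<le> b" using path_le[OF b(1)] .
    have j: "joins (a,b,\<beta>) (phi (inv\<^bsub>G\<^esub> h) x) (phi (inv\<^bsub>G\<^esub> h) y)"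
      using H b(2) ab unfolding joins_def by auto
    have far: "\<delta> < dist (\<pi> (phi (inv\<^bsub>G\<^esub> h) x)) (\<pi> (phi (inv\<^bsub>G\<^esub> h) y))"
      using H phi_dist[OF h] by simp
    have "(\<exists>t\<in>{a..b}. \<beta> t \<in> cball (\<pi> (phi (inv\<^bsub>G\<^esub> h) x)) \<delta>) \<and> (\<exists>t\<in>{a..b}. \<beta> t \<in> cball (\<pi> (phi (inv\<^bsub>G\<^esub> h) y)) \<delta>)"
      using cm_cs2[OF cm b(1) j far] .
    then obtain t1 t2 where t: "t1 \<in> {a..b}" "t2 \<in> {a..b}"
      "dist (\<pi> (phi (inv\<^bsub>G\<^esub> h) x)) (\<beta> t1) \<le> \<delta>" "dist (\<pi> (phi (inv\<^bsub>G\<^esub> h) y)) (\<beta> t2) \<le> \<delta>"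
      by auto
    have e1: "dist (phi h (\<pi> (phi (inv\<^bsub>G\<^esub> h) x))) (\<alpha> t1) \<le> \<delta>"
      using t(3) b(2) t(1) phi_dist[OF h, of "\<pi> (phi (inv\<^bsub>G\<^esub> h) x)" "phi (inv\<^bsub>G\<^esub> h) (\<alpha> t1)"] phi_inv_r[OF h] by simp
    have e2: "dist (phi h (\<pi> (phi (inv\<^bsub>G\<^esub> h) y))) (\<alpha> t2) \<le> \<delta>"
      using t(4) b(2) t(2) phi_dist[OF h, of "\<pi> (phi (inv\<^bsub>G\<^esub> h) y)" "phi (inv\<^bsub>G\<^esub> h) (\<alpha> t2)"] phi_inv_r[OF h] by simp
    show "(\<exists>t\<in>{a..b}. \<alpha> t \<in> cball (phi h (\<pi> (phi (inv\<^bsub>G\<^esub> h) x))) \<delta>) \<and>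
          (\<exists>t\<in>{a..b}. \<alpha> t \<in> cball (phi h (\<pi> (phi (inv\<^bsub>G\<^esub> h) y))) \<delta>)"
      using e1 e2 t(1,2) by auto
  qed
  show ?thesis unfolding constricting_map_def by (intro conjI P1 P2 P3)
qed

lemma eq_maps:
  assumes c1: "constricting_map Gam \<delta> B \<pi>1" and c2: "constricting_map Gam \<delta> B \<pi>2" and d: "\<delta> \<ge> 0"
  shows "dist (\<pi>1 x) (\<pi>2 x) \<le> K1*\<delta> + nu + 4*\<delta>"
proof (rule ccontr)
  define D where "D = dist (\<pi>1 x) (\<pi>2 x)"
  assume "\<not> ?thesis"
  then have DD: "D > K1*\<delta> + nu + 4*\<delta>" unfolding D_def by simp
  have kd: "K1*\<delta> \<ge> 0" using K1_nonneg d by simp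
  have nu: "nu \<ge> 0" by (rule nu_ge)
  obtain a b \<alpha> where p: "(a,b,\<alpha>) \<in> Gam" "a \<le> b" "\<alpha> a = x" "\<alpha> b = \<pi>2 x" using path_exists by blast
  have n1: "dist (\<pi>2 x) (\<pi>1 (\<pi>2 x)) \<le> \<delta>" using cm_near[OF c1 cm_in[OF c2]] .
  have "D \<le> dist (\<pi>1 x) (\<pi>1 (\<pi>2 x)) + dist (\<pi>1 (\<pi>2 x)) (\<pi>2 x)" unfolding D_def by (rule dist_triangle)
  then have far1: "dist (\<pi>1 (\<alpha> a)) (\<pi>1 (\<alpha> b)) > \<delta>" using p n1 DD kd nu d by (simp add: dist_commute)
  obtain u where u: "u \<in> {a..b}" "dist (\<alpha> u) (\<pi>1 x) \<le> \<delta>"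
    using pass[OF c1 p(1) order_refl p(2) order_refl far1] p by auto
  have l: "dist (\<pi>2 (\<alpha> u)) (\<pi>2 (\<pi>1 x)) \<le> K1 * dist (\<alpha> u) (\<pi>1 x) + nu + 2*\<delta>" by (rule lip[OF c2 d])
  have "K1 * dist (\<alpha> u) (\<pi>1 x) \<le> K1 * \<delta>" using K1_mono u(2) by simp
  moreover have n2: "dist (\<pi>1 x) (\<pi>2 (\<pi>1 x)) \<le> \<delta>" using cm_near[OF c2 cm_in[OF c1]] .
  moreover have "dist (\<pi>2 (\<alpha> u)) (\<pi>1 x) \<le> dist (\<pi>2 (\<alpha> u)) (\<pi>2 (\<pi>1 x)) + dist (\<pi>2 (\<pi>1 x)) (\<pi>1 x)"
    by (rule dist_triangle)
  ultimately have m: "dist (\<pi>2 (\<alpha> u)) (\<pi>1 x) \<le> K1*\<delta> + nu + 3*\<delta>" using l by (simp add: dist_commute)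
  have "D \<le> dist (\<pi>1 x) (\<pi>2 (\<alpha> u)) + dist (\<pi>2 (\<alpha> u)) (\<pi>2 x)" unfolding D_def by (rule dist_triangle)
  then have far2: "dist (\<pi>2 (\<alpha> a)) (\<pi>2 (\<alpha> u)) > \<delta>" using p m DD by (simp add: dist_commute)
  obtain v where v: "v \<in> {a..u}" "dist (\<alpha> v) (\<pi>2 x) \<le> \<delta>"
    using pass[OF c2 p(1) order_refl _ _ far2] u p by auto
  have q: "dist (\<alpha> v) (\<alpha> u) + dist (\<alpha> u) (\<alpha> b) \<le> K1 * dist (\<alpha> v) (\<alpha> b) + nu"
    using QG3[OF p(1), of v u b] v u by auto
  have "K1 * dist (\<alpha> v) (\<alpha> b) \<le> K1 * \<delta>" using K1_mono v(2) p(4) by simp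
  moreover have "D \<le> dist (\<pi>1 x) (\<alpha> u) + dist (\<alpha> u) (\<alpha> v) + dist (\<alpha> v) (\<pi>2 x)"
    unfolding D_def using dist_triangle[of "\<pi>1 x" "\<pi>2 x" "\<alpha> v"] dist_triangle[of "\<pi>1 x" "\<alpha> v" "\<alpha> u"] by linarith
  moreover have "D \<le> dist (\<pi>1 x) (\<alpha> u) + dist (\<alpha> u) (\<alpha> b)"
    unfolding D_def using dist_triangle[of "\<pi>1 x" "\<pi>2 x" "\<alpha> u"] p(4) by simp
  ultimately show False using q u(2) v(2) DD kd nu d by (simp add: dist_commute)
qed


lemma transverse:
  assumes c1: "constricting_map Gam \<delta> B1 \<pi>1" and c2: "constricting_map Gam \<delta> B2 \<pi>2" and d: "\<delta> \<ge> 0"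
    and b1: "\<forall>b\<in>B2. dist (\<pi>1 b) c1 \<le> Rb" and b2: "\<forall>b\<in>B1. dist (\<pi>2 b) c2 \<le> Rb"
  shows "dist (\<pi>1 x) c1 \<le> Rb + K1*(K1*\<delta>+nu+3*\<delta>) + K1*\<delta> + 2*nu + 4*\<delta>
       \<or> dist (\<pi>2 x) c2 \<le> Rb + K1*(K1*\<delta>+nu+3*\<delta>) + K1*\<delta> + 2*nu + 4*\<delta>"
proof (rule ccontr)
  define K where "K = Rb + K1*(K1*\<delta>+nu+3*\<delta>) + K1*\<delta> + 2*nu + 4*\<delta>"
  define p where "p = \<pi>1 x"
  define q where "q = \<pi>2 x"
  assume "\<not> ?thesis"
  then have fp: "dist p c1 > K" and fq: "dist q c2 > K" unfolding K_def p_def q_def by auto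
  have kd: "K1*\<delta> \<ge> 0" using K1_nonneg d by simp
  have kk: "K1*(K1*\<delta>+nu+3*\<delta>) \<ge> 0" using K1_nonneg d kd nu_ge by simp
  have nu: "nu \<ge> 0" by (rule nu_ge)
  have pB: "p \<in> B1" unfolding p_def by (rule cm_in[OF c1])
  have qB: "q \<in> B2" unfolding q_def by (rule cm_in[OF c2])
  obtain a b \<alpha> where P: "(a,b,\<alpha>) \<in> Gam" "a \<le> b" "\<alpha> a = x" "\<alpha> b = p" using path_exists by blast
  have "dist (\<pi>2 p) c2 \<le> Rb" using b2 pB by simp
  moreover have "dist q c2 \<le> dist q (\<pi>2 p) + dist (\<pi>2 p) c2" by (rule dist_triangle)
  ultimately have far1: "dist (\<pi>2 (\<alpha> a)) (\<pi>2 (\<alpha> b)) > \<delta>" using fq P unfolding K_def q_def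
    using kd kk nu d by simp
  obtain s where s: "s \<in> {a..b}" "dist (\<alpha> s) q \<le> \<delta>"
    using pass[OF c2 P(1) order_refl P(2) order_refl far1] P unfolding q_def by auto
  have l1: "dist (\<pi>1 (\<alpha> s)) (\<pi>1 q) \<le> K1 * dist (\<alpha> s) q + nu + 2*\<delta>" by (rule lip[OF c1 d])
  have "K1 * dist (\<alpha> s) q \<le> K1*\<delta>" using K1_mono s(2) by simp
  moreover have "dist (\<pi>1 q) c1 \<le> Rb" using b1 qB by simp
  moreover have "dist (\<pi>1 (\<alpha> s)) c1 \<le> dist (\<pi>1 (\<alpha> s)) (\<pi>1 q) + dist (\<pi>1 q) c1" by (rule dist_triangle)
  ultimately have zc: "dist (\<pi>1 (\<alpha> s)) c1 \<le> Rb + K1*\<delta> + nu + 2*\<delta>" using l1 by simp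
  have "dist p c1 \<le> dist p (\<pi>1 (\<alpha> s)) + dist (\<pi>1 (\<alpha> s)) c1" by (rule dist_triangle)
  then have far2: "dist (\<pi>1 (\<alpha> a)) (\<pi>1 (\<alpha> s)) > \<delta>" using fp zc P unfolding K_def p_def
    using kk nu d by simp
  obtain u where u: "u \<in> {a..s}" "dist (\<alpha> u) p \<le> \<delta>"
    using pass[OF c1 P(1) order_refl _ _ far2] s P unfolding p_def by auto
  have Q: "dist (\<alpha> u) (\<alpha> s) + dist (\<alpha> s) (\<alpha> b) \<le> K1 * dist (\<alpha> u) (\<alpha> b) + nu"
    using QG3[OF P(1), of u s b] u s by auto
  have "K1 * dist (\<alpha> u) (\<alpha> b) \<le> K1*\<delta>" using K1_mono u(2) P(4) by simp
  moreover have "dist p q \<le> dist p (\<alpha> u) + dist (\<alpha> u) (\<alpha> s) + dist (\<alpha> s) q"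
    using dist_triangle[of p q "\<alpha> s"] dist_triangle[of p "\<alpha> s" "\<alpha> u"] by linarith
  moreover have "dist p q \<le> dist p (\<alpha> s) + dist (\<alpha> s) q" by (rule dist_triangle)
  ultimately have pq: "dist p q \<le> K1*\<delta>+nu+3*\<delta>" using Q u(2) s(2) P(4) d nu kd by (simp add: dist_commute)
  have l2: "dist (\<pi>1 q) (\<pi>1 p) \<le> K1 * dist q p + nu + 2*\<delta>" by (rule lip[OF c1 d])
  have "K1 * dist q p \<le> K1*(K1*\<delta>+nu+3*\<delta>)" using K1_mono pq by (simp add: dist_commute)
  moreover have "dist p (\<pi>1 p) \<le> \<delta>" by (rule cm_near[OF c1 pB])
  moreover have "dist (\<pi>1 q) c1 \<le> Rb" using b1 qB by simp
  moreover have "dist p c1 \<le> dist p (\<pi>1 p) + dist (\<pi>1 p) (\<pi>1 q) + dist (\<pi>1 q) c1"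
    using dist_triangle[of p c1 "\<pi>1 q"] dist_triangle[of p "\<pi>1 q" "\<pi>1 p"] by linarith
  ultimately show False using fp l2 kd nu d unfolding K_def by (simp add: dist_commute)
qed


end



context PSG
begin

lemma CC:
  assumes cP: "constricting_map Gam \<delta> B1 P" and cQ: "constricting_map Gam \<delta> B2 Q" and d: "\<delta> \<ge> 0"
    and y1: "y1 \<in> B2" and y2: "y2 \<in> B2"
    and far: "dist (P y1) (P y2) > K1*((K1*\<delta>+nu+4*\<delta>) + 2*\<delta>) + nu + 2*\<delta> + (K1*(\<delta>+(K1*\<delta>+nu+4*\<delta>)) + nu + 2*\<delta>) + \<delta>"
  shows "\<exists>b\<in>B2. dist (P y1) b \<le> K1*(\<delta> + (K1*(\<delta>+(K1*\<delta>+nu+4*\<delta>)) + nu + 2*\<delta>)) + 2*nu + 3*\<delta> + (K1*\<delta>+nu+4*\<delta>) + K1*\<delta>"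
proof -
  define E1 where "E1 = K1*\<delta>+nu+4*\<delta>"
  define E2 where "E2 = K1*(\<delta>+E1) + nu + 2*\<delta>"
  define C3 where "C3 = K1*(E1 + 2*\<delta>) + nu + 2*\<delta> + E2 + \<delta>"
  define C4 where "C4 = K1*(\<delta> + E2) + 2*nu + 3*\<delta> + E1 + K1*\<delta>"
  define p1 where "p1 = P y1"
  define p2 where "p2 = P y2"
  have nu: "nu \<ge> 0" by (rule nu_ge)
  have kd: "K1*\<delta> \<ge> 0" using K1_nonneg d by simp
  have E1p: "E1 \<ge> 0" unfolding E1_def using kd nu d by simp
  have E2p: "E2 \<ge> 0" unfolding E2_def using K1_nonneg[of "\<delta>+E1"] E1p nu d by simp
  have k3: "K1*(E1 + 2*\<delta>) \<ge> 0" using K1_nonneg[of "E1+2*\<delta>"] E1p d by simp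
  have k4: "K1*(\<delta> + E2) \<ge> 0" using K1_nonneg[of "\<delta>+E2"] E2p d by simp
  have fp: "dist p1 p2 > C3" using far unfolding p1_def p2_def C3_def E2_def E1_def .
  show ?thesis unfolding E1_def[symmetric] E2_def[symmetric] C4_def[symmetric] p1_def[symmetric]
  proof -
    have p1B: "p1 \<in> B1" unfolding p1_def by (rule cm_in[OF cP])
    have ny1: "dist y1 (Q y1) \<le> \<delta>" by (rule cm_near[OF cQ y1])
    have ny2: "dist y2 (Q y2) \<le> \<delta>" by (rule cm_near[OF cQ y2])
    have "dist p1 p2 \<le> K1 * dist y1 y2 + nu + 2*\<delta>" unfolding p1_def p2_def by (rule lip[OF cP d])
    then have "K1 * (E1 + 2*\<delta>) < K1 * dist y1 y2" using fp E2p d unfolding C3_def by simp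
    then have yy: "dist y1 y2 > E1 + 2*\<delta>" using K1_ge by (simp add: mult_less_cancel_left_pos)
    obtain a b \<alpha> where G1: "(a,b,\<alpha>) \<in> Gam" "a \<le> b" "\<alpha> a = y1" "\<alpha> b = y2" using path_exists by blast
    have "dist (P (\<alpha> a)) (P (\<alpha> b)) > \<delta>" using G1 fp unfolding C3_def p1_def p2_def using k3 nu E2p d by simp
    then obtain t1 where t1: "t1 \<in> {a..b}" "dist (\<alpha> t1) p1 \<le> \<delta>"
      using pass[OF cP G1(1) order_refl G1(2) order_refl] G1 unfolding p1_def by auto
    define z where "z = \<alpha> t1"
    have lQ: "dist (Q p1) (Q z) \<le> K1*\<delta> + nu + 2*\<delta>"
      using lip[OF cQ d, of p1 z] K1_mono[of "dist p1 z" \<delta>] t1(2) unfolding z_def by (simp add: dist_commute)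
    consider (i) "dist (Q y1) (Q z) > \<delta>" "dist (Q z) (Q y2) > \<delta>"
      | (ii) "dist (Q y1) (Q z) \<le> \<delta>" | (iii) "dist (Q z) (Q y2) \<le> \<delta>" by linarith
    then show "\<exists>b\<in>B2. dist p1 b \<le> C4"
    proof cases
      case i
      have f1: "dist (Q (\<alpha> a)) (Q (\<alpha> t1)) > \<delta>" using i(1) G1 unfolding z_def by simp
      have f2: "dist (Q (\<alpha> t1)) (Q (\<alpha> b)) > \<delta>" using i(2) G1 unfolding z_def by simp
      obtain s where s: "s \<in> {a..t1}" "dist (\<alpha> s) (Q z) \<le> \<delta>"
        using pass[OF cQ G1(1) order_refl _ _ f1] t1 unfolding z_def by auto
      obtain s' where s': "s' \<in> {t1..b}" "dist (\<alpha> s') (Q z) \<le> \<delta>"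
        using pass[OF cQ G1(1) _ _ order_refl f2] t1 unfolding z_def by auto
      have q: "dist (\<alpha> s) z + dist z (\<alpha> s') \<le> K1 * dist (\<alpha> s) (\<alpha> s') + nu"
        using QG3[OF G1(1), of s t1 s'] s s' t1 unfolding z_def by auto
      have "dist (\<alpha> s) (\<alpha> s') \<le> 2*\<delta>"
        using dist_triangle[of "\<alpha> s" "\<alpha> s'" "Q z"] s(2) s'(2) by (simp add: dist_commute)
      then have "K1 * dist (\<alpha> s) (\<alpha> s') \<le> K1 * (2*\<delta>)" by (rule K1_mono)
      moreover have "K1 * (2*\<delta>) = 2*(K1*\<delta>)" by simp
      moreover have "dist z (Q z) \<le> dist z (\<alpha> s) + dist (\<alpha> s) (Q z)" by (rule dist_triangle)
      moreover have "dist z (Q z) \<le> dist z (\<alpha> s') + dist (\<alpha> s') (Q z)" by (rule dist_triangle)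
      ultimately have zq: "2 * dist z (Q z) \<le> 2*(K1*\<delta>) + nu + 2*\<delta>" using q s(2) s'(2) by (simp add: dist_commute)
      have "dist p1 (Q z) \<le> dist p1 z + dist z (Q z)" by (rule dist_triangle)
      then have "dist p1 (Q z) \<le> C4" using zq t1(2) k4 nu kd E1p d unfolding C4_def z_def by (simp add: dist_commute)
      moreover have "Q z \<in> B2" by (rule cm_in[OF cQ])
      ultimately show ?thesis by blast
    next
      case ii
      have "dist (Q p1) y1 \<le> dist (Q p1) (Q z) + dist (Q z) (Q y1) + dist (Q y1) y1"
        using dist_triangle[of "Q p1" y1 "Q y1"] dist_triangle[of "Q p1" "Q y1" "Q z"] by linarith
      then have e1: "dist (Q p1) y1 \<le> E1" using lQ ii ny1 unfolding E1_def by (simp add: dist_commute)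
      have "dist y1 y2 \<le> dist y1 (Q p1) + dist (Q p1) (Q y2) + dist (Q y2) y2"
        using dist_triangle[of y1 y2 "Q y2"] dist_triangle[of y1 "Q y2" "Q p1"] by linarith
      then have farQ: "dist (Q p1) (Q y2) > \<delta>" using yy e1 ny2 by (simp add: dist_commute)
      obtain a' b' \<beta> where S: "(a',b',\<beta>) \<in> Gam" "a' \<le> b'" "\<beta> a' = p1" "\<beta> b' = y2" using path_exists by blast
      obtain s where s: "s \<in> {a'..b'}" "dist (\<beta> s) (Q p1) \<le> \<delta>"
        using pass[OF cQ S(1) order_refl S(2) order_refl] farQ S by auto
      define w where "w = \<beta> s"
      have wy: "dist w y1 \<le> \<delta> + E1" using dist_triangle[of w y1 "Q p1"] s(2) e1 unfolding w_def by simp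
      have "dist (P w) (P y1) \<le> K1 * dist w y1 + nu + 2*\<delta>" by (rule lip[OF cP d])
      moreover have "K1 * dist w y1 \<le> K1 * (\<delta> + E1)" using K1_mono wy .
      ultimately have pw: "dist (P w) p1 \<le> E2" unfolding E2_def p1_def by simp
      have "dist p1 p2 \<le> dist p1 (P w) + dist (P w) p2" by (rule dist_triangle)
      then have farP: "dist (P (\<beta> s)) (P (\<beta> b')) > \<delta>" using fp pw S k3 nu d E2p unfolding C3_def w_def p2_def
        by (simp add: dist_commute)
      obtain s' where s': "s' \<in> {s..b'}" "dist (\<beta> s') (P w) \<le> \<delta>"
        using pass[OF cP S(1) _ _ order_refl farP] s unfolding w_def by auto
      have q: "dist (\<beta> a') (\<beta> s) + dist (\<beta> s) (\<beta> s') \<le> K1 * dist (\<beta> a') (\<beta> s') + nu"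
        using QG3[OF S(1), of a' s s'] s s' by auto
      have "dist p1 (\<beta> s') \<le> \<delta> + E2" using dist_triangle[of p1 "\<beta> s'" "P w"] s'(2) pw by (simp add: dist_commute)
      then have "K1 * dist p1 (\<beta> s') \<le> K1 * (\<delta> + E2)" by (rule K1_mono)
      then have "dist p1 w \<le> K1 * (\<delta> + E2) + nu" using q[unfolded S(3)] zero_le_dist[of "\<beta> s" "\<beta> s'"] zero_le_dist[of "\<beta> s" "\<beta> u"] unfolding w_def by linarith
      then have "dist p1 y1 \<le> C4" using dist_triangle[of p1 y1 w] wy kd nu d unfolding C4_def by simp
      then show ?thesis using y1 by blast
    next
      case iii
      have "dist (Q p1) y2 \<le> dist (Q p1) (Q z) + dist (Q z) (Q y2) + dist (Q y2) y2"
        using dist_triangle[of "Q p1" y2 "Q y2"] dist_triangle[of "Q p1" "Q y2" "Q z"] by linarith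
      then have e1: "dist (Q p1) y2 \<le> E1" using lQ iii ny2 unfolding E1_def by (simp add: dist_commute)
      have "dist y2 y1 \<le> dist y2 (Q p1) + dist (Q p1) (Q y1) + dist (Q y1) y1"
        using dist_triangle[of y2 y1 "Q y1"] dist_triangle[of y2 "Q y1" "Q p1"] by linarith
      then have farQ: "dist (Q p1) (Q y1) > \<delta>" using yy e1 ny1 by (simp add: dist_commute)
      obtain a' b' \<beta> where S: "(a',b',\<beta>) \<in> Gam" "a' \<le> b'" "\<beta> a' = p1" "\<beta> b' = y1" using path_exists by blast
      obtain s where s: "s \<in> {a'..b'}" "dist (\<beta> s) (Q p1) \<le> \<delta>"
        using pass[OF cQ S(1) order_refl S(2) order_refl] farQ S by auto
      define w where "w = \<beta> s"
      have wy: "dist w y2 \<le> \<delta> + E1" using dist_triangle[of w y2 "Q p1"] s(2) e1 unfolding w_def by simp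
      have "dist (P w) (P y2) \<le> K1 * dist w y2 + nu + 2*\<delta>" by (rule lip[OF cP d])
      moreover have "K1 * dist w y2 \<le> K1 * (\<delta> + E1)" using K1_mono wy .
      ultimately have pw: "dist (P w) p2 \<le> E2" unfolding E2_def p2_def by simp
      have "dist p1 p2 \<le> dist p1 (P w) + dist (P w) p2" by (rule dist_triangle)
      then have farP: "dist (P (\<beta> s)) (P (\<beta> b')) > \<delta>" using fp pw S k3 nu d E2p unfolding C3_def w_def p1_def
        by (simp add: dist_commute)
      obtain u where u: "u \<in> {s..b'}" "dist (\<beta> u) (P (\<beta> b')) \<le> \<delta>"
        using pass[OF cP S(1) _ _ order_refl farP] s by auto
      have q: "dist (\<beta> a') (\<beta> s) + dist (\<beta> s) (\<beta> u) \<le> K1 * dist (\<beta> a') (\<beta> u) + nu"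
        using QG3[OF S(1), of a' s u] s u by auto
      have "K1 * dist p1 (\<beta> u) \<le> K1 * \<delta>" using K1_mono u(2) S(4) unfolding p1_def by (simp add: dist_commute)
      then have "dist p1 w \<le> K1 * \<delta> + nu" using q[unfolded S(3)] zero_le_dist[of "\<beta> s" "\<beta> s'"] zero_le_dist[of "\<beta> s" "\<beta> u"] unfolding w_def by linarith
      then have "dist p1 y2 \<le> C4" using dist_triangle[of p1 y2 w] wy k4 nu d kd E1p unfolding C4_def by simp
      then show ?thesis using y2 by blast
    qed
  qed
qed


end



context PSG
begin

lemma letter_closed: "a \<in> carrier G \<Longrightarrow> b \<in> carrier G \<Longrightarrow> letter_val G a b l \<in> carrier G"
  using grp unfolding letter_val_def Let_def by (auto simp: group.inv_closed)

lemma word_closed: "a \<in> carrier G \<Longrightarrow> b \<in> carrier G \<Longrightarrow> word_val G a b w \<in> carrier G"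
proof (induction w)
  case Nil then show ?case using grp by (simp add: monoid.one_closed group.is_monoid)
next
  case (Cons l w) then show ?case using grp letter_closed by (simp add: monoid.m_closed group.is_monoid)
qed

lemma reduced_tl: "reduced_word (l # w) \<Longrightarrow> reduced_word w"
  unfolding reduced_word_def
proof (intro allI impI)
  fix i assume H: "\<forall>i. Suc i < length (l # w) \<longrightarrow> \<not> (fst ((l # w) ! i) = fst ((l # w) ! Suc i) \<and> snd ((l # w) ! i) \<noteq> snd ((l # w) ! Suc i))"
    and i: "Suc i < length w"
  from H[rule_format, of "Suc i"] i show "\<not> (fst (w ! i) = fst (w ! Suc i) \<and> snd (w ! i) \<noteq> snd (w ! Suc i))" by simp
qed

lemma reduced_hd: "reduced_word (l # l' # w) \<Longrightarrow> l' \<noteq> (fst l, \<not> snd l)"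
  unfolding reduced_word_def by (drule spec[of _ 0]) auto

lemma pingpong:
  assumes a: "a \<in> carrier G" and b: "b \<in> carrier G"
    and step: "\<And>l x. x \<notin> S (fst l, \<not> snd l) \<Longrightarrow> phi (letter_val G a b l) x \<in> S l"
    and disj: "\<And>l l' x. l \<noteq> l' \<Longrightarrow> x \<in> S l \<Longrightarrow> x \<in> S l' \<Longrightarrow> False"
    and base: "\<And>l. p \<notin> S l"
  shows "free_basis2 G a b"
proof -
  have main: "w \<noteq> [] \<Longrightarrow> reduced_word w \<Longrightarrow> phi (word_val G a b w) p \<in> S (hd w)" for w
  proof (induction w)
    case Nil then show ?case by simp
  next
    case (Cons l w)
    have lc: "letter_val G a b l \<in> carrier G" using letter_closed a b .
    have wc: "word_val G a b w \<in> carrier G" using word_closed a b .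
    show ?case
    proof (cases w)
      case Nil
      have "phi (word_val G a b (l # w)) p = phi (letter_val G a b l) p"
        using Nil lc grp by (simp add: monoid.r_one group.is_monoid)
      then show ?thesis using step base by simp
    next
      case (Cons l' w')
      have r: "reduced_word w" using reduced_tl Cons.prems(2) .
      have IH: "phi (word_val G a b w) p \<in> S l'" using Cons.IH r Cons by simp
      have ne: "l' \<noteq> (fst l, \<not> snd l)" using reduced_hd Cons.prems(2) Cons by simp
      have "phi (word_val G a b w) p \<notin> S (fst l, \<not> snd l)" using disj[OF ne IH] by blast
      then have "phi (letter_val G a b l) (phi (word_val G a b w) p) \<in> S l" by (rule step)
      then show ?thesis using phi_mult[OF lc wc] by simp
    qed
  qed
  show ?thesis unfolding free_basis2_def
  proof (intro conjI a b allI impI)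
    fix w assume w: "w \<noteq> [] \<and> reduced_word w"
    show "word_val G a b w \<noteq> \<one>\<^bsub>G\<^esub>"
    proof
      assume "word_val G a b w = \<one>\<^bsub>G\<^esub>"
      then have "p \<in> S (hd w)" using main w phi_one by metis
      then show False using base by blast
    qed
  qed
qed

end

locale CE = PSG +
  fixes g :: 'g and \<delta> :: real and A :: "'x::metric_space set" and \<pi> :: "'x \<Rightarrow> 'x" and x0 :: 'x
  assumes g: "g \<in> carrier G" and io: "infinite_order G g" and d: "\<delta> \<ge> 0"
    and Ainv: "\<forall>k\<in>generate G {g}. phi k ` A \<subseteq> A"
    and cm: "constricting_map Gam \<delta> A \<pi>"
    and cob: "\<forall>a\<in>A. \<forall>a'\<in>A. \<exists>k\<in>generate G {g}. dist a (phi k a') \<le> \<delta>"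
    and x0A: "x0 \<in> A"
begin

abbreviation gp :: "int \<Rightarrow> 'g" where "gp i \<equiv> g [^]\<^bsub>G\<^esub> i"

lemma gen: "generate G {g} = range gp"
  using group.generate_pow[OF grp g] by auto

lemma gp_closed[simp]: "gp i \<in> carrier G"
  using grp g by (simp add: group.int_pow_closed)

lemma gp_add: "gp (i + j) = gp i \<otimes>\<^bsub>G\<^esub> gp j"
  using grp g by (simp add: group.int_pow_mult)

lemma gp_neg: "gp (- i) = inv\<^bsub>G\<^esub> (gp i)"
  using grp g by (simp add: group.int_pow_neg)

lemma gp_zero: "gp 0 = \<one>\<^bsub>G\<^esub>" by simp

lemma phi_gp_add: "phi (gp (i + j)) x = phi (gp i) (phi (gp j) x)"
  using gp_add phi_mult by simp

lemma gp_one_imp: "gp k = \<one>\<^bsub>G\<^esub> \<Longrightarrow> k = 0"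
proof (rule ccontr)
  assume k: "gp k = \<one>\<^bsub>G\<^esub>" "k \<noteq> 0"
  have k': "gp \<bar>k\<bar> = \<one>\<^bsub>G\<^esub>"
  proof (cases "k \<ge> 0")
    case True then show ?thesis using k by simp
  next
    case False
    then have "\<bar>k\<bar> = - k" by simp
    then show ?thesis using k gp_neg[of k] grp by (simp add: group.is_monoid monoid.inv_one)
  qed
  have "g [^]\<^bsub>G\<^esub> (nat \<bar>k\<bar>) = \<one>\<^bsub>G\<^esub>" using k' pow_nat[of "\<bar>k\<bar>" G g] by simp
  moreover have "nat \<bar>k\<bar> \<ge> 1" using k by simp
  ultimately show False using io unfolding infinite_order_def by blast
qed

lemma gp_inj: "gp i = gp j \<Longrightarrow> i = j"
proof -
  assume e: "gp i = gp j"
  have "gp (i - j) = gp i \<otimes>\<^bsub>G\<^esub> inv\<^bsub>G\<^esub> (gp j)" using gp_add[of i "-j"] gp_neg[of j] by simp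
  also have "\<dots> = \<one>\<^bsub>G\<^esub>" using e grp by (simp add: group.r_inv)
  finally show "i = j" using gp_one_imp by fastforce
qed

lemma dist_gp: "dist (phi (gp i) x) (phi (gp j) x) = dist x (phi (gp (j - i)) x)"
proof -
  have "dist (phi (gp i) x) (phi (gp j) x) = dist (phi (gp i) x) (phi (gp i) (phi (gp (j - i)) x))"
    using phi_gp_add[of i "j - i" x] by simp
  also have "\<dots> = dist x (phi (gp (j - i)) x)" by (rule phi_dist[OF gp_closed])
  finally show ?thesis .
qed

lemma cob': assumes "a \<in> A" shows "\<exists>i. dist a (phi (gp i) x0) \<le> \<delta>"
proof -
  obtain k where "k \<in> generate G {g}" "dist a (phi k x0) \<le> \<delta>" using cob x0A assms by blast
  then show ?thesis unfolding gen by blast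
qed

lemma A_eq: "phi (gp i) ` A = A"
proof
  show "phi (gp i) ` A \<subseteq> A" using Ainv gen by blast
  show "A \<subseteq> phi (gp i) ` A"
  proof
    fix a assume a: "a \<in> A"
    have "phi (gp (-i)) a \<in> A" using Ainv gen a by blast
    moreover have "phi (gp i) (phi (gp (-i)) a) = a" using phi_gp_add[of i "-i" a] phi_one by simp
    ultimately show "a \<in> phi (gp i) ` A" by (metis image_eqI)
  qed
qed

definition Ceq where "Ceq = K1*\<delta> + nu + 4*\<delta>"

lemma equiv: "dist (\<pi> (phi (gp i) x)) (phi (gp i) (\<pi> x)) \<le> Ceq"
proof -
  have c2: "constricting_map Gam \<delta> A (\<lambda>x. phi (gp i) (\<pi> (phi (inv\<^bsub>G\<^esub> (gp i)) x)))"
    using conj_map[OF cm gp_closed[of i]] A_eq by simp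
  have "dist (\<pi> (phi (gp i) x)) (phi (gp i) (\<pi> (phi (inv\<^bsub>G\<^esub> (gp i)) (phi (gp i) x)))) \<le> Ceq"
    using eq_maps[OF cm c2 d] unfolding Ceq_def by blast
  then show ?thesis using phi_inv_l[OF gp_closed] by simp
qed

lemma fin_pow: "finite {i. dist x0 (phi (gp i) x0) \<le> r}"
proof -
  have "finite {h \<in> carrier G. dist x0 (phi h x0) \<le> r}" using proper unfolding proper_action_def by blast
  moreover have "gp ` {i. dist x0 (phi (gp i) x0) \<le> r} \<subseteq> {h \<in> carrier G. dist x0 (phi h x0) \<le> r}" by auto
  ultimately have "finite (gp ` {i. dist x0 (phi (gp i) x0) \<le> r})" by (rule finite_subset[rotated])
  moreover have "inj_on gp {i. dist x0 (phi (gp i) x0) \<le> r}" using gp_inj by (auto simp: inj_on_def)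
  ultimately show ?thesis using finite_imageD by blast
qed

lemma bnd_pow: "\<exists>B. \<forall>i. dist x0 (phi (gp i) x0) \<le> r \<longrightarrow> \<bar>i\<bar> \<le> B"
proof -
  have "finite (abs ` {i. dist x0 (phi (gp i) x0) \<le> r})" using fin_pow by simp
  then obtain B where "\<forall>y\<in>abs ` {i. dist x0 (phi (gp i) x0) \<le> r}. y \<le> B"
    using bdd_above_finite unfolding bdd_above_def by blast
  then show ?thesis by auto
qed

end



lemma (in group) cancel_l: "x \<in> carrier G \<Longrightarrow> y \<in> carrier G \<Longrightarrow> x \<otimes> (inv x \<otimes> y) = y"
  by (simp add: m_assoc[symmetric])

lemma (in group) cancel_l': "x \<in> carrier G \<Longrightarrow> y \<in> carrier G \<Longrightarrow> inv x \<otimes> (x \<otimes> y) = y"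
  by (simp add: m_assoc[symmetric])

lemma (in group) conj_inv: "h \<in> carrier G \<Longrightarrow> x \<in> carrier G \<Longrightarrow> inv (h \<otimes> x \<otimes> inv h) = h \<otimes> inv x \<otimes> inv h"
  by (simp add: inv_mult_group m_assoc)

context CE
begin

lemma gp_comm_pow_nat:
  assumes f: "f \<in> carrier G" and e: "f \<otimes>\<^bsub>G\<^esub> gp m = gp n \<otimes>\<^bsub>G\<^esub> f"
  shows "f \<otimes>\<^bsub>G\<^esub> gp (m * int q) = gp (n * int q) \<otimes>\<^bsub>G\<^esub> f"
proof (induction q)
  case 0 then show ?case using f grp by (simp add: group.is_monoid monoid.l_one monoid.r_one)
next
  case (Suc q)
  interpret Gr: group G by (rule grp)
  have "f \<otimes>\<^bsub>G\<^esub> gp (m * int (Suc q)) = f \<otimes>\<^bsub>G\<^esub> (gp (m * int q) \<otimes>\<^bsub>G\<^esub> gp m)"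
    using gp_add[of "m * int q" m] by (simp add: algebra_simps)
  also have "\<dots> = (f \<otimes>\<^bsub>G\<^esub> gp (m * int q)) \<otimes>\<^bsub>G\<^esub> gp m" using f by (simp add: Gr.m_assoc)
  also have "\<dots> = gp (n * int q) \<otimes>\<^bsub>G\<^esub> (f \<otimes>\<^bsub>G\<^esub> gp m)" using Suc f by (simp add: Gr.m_assoc)
  also have "\<dots> = gp (n * int q) \<otimes>\<^bsub>G\<^esub> (gp n \<otimes>\<^bsub>G\<^esub> f)" using e by simp
  also have "\<dots> = gp (n * int (Suc q)) \<otimes>\<^bsub>G\<^esub> f"
    using gp_add[of "n * int q" n] f by (simp add: algebra_simps Gr.m_assoc)
  finally show ?case .
qed

lemma gp_comm_pow:
  assumes f: "f \<in> carrier G" and e: "f \<otimes>\<^bsub>G\<^esub> gp m = gp n \<otimes>\<^bsub>G\<^esub> f"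
  shows "f \<otimes>\<^bsub>G\<^esub> gp (m * q) = gp (n * q) \<otimes>\<^bsub>G\<^esub> f"
proof (cases "q \<ge> 0")
  case True
  define k where "k = nat q"
  have "q = int k" using True unfolding k_def by simp
  then show ?thesis using gp_comm_pow_nat[OF f e] by simp
next
  case False
  interpret Gr: group G by (rule grp)
  define k where "k = nat (- q)"
  have k: "q = - int k" using False unfolding k_def by simp
  have E: "f \<otimes>\<^bsub>G\<^esub> gp (m * int k) = gp (n * int k) \<otimes>\<^bsub>G\<^esub> f" using gp_comm_pow_nat[OF f e] .
  have "inv\<^bsub>G\<^esub> (gp (n * int k)) \<otimes>\<^bsub>G\<^esub> (f \<otimes>\<^bsub>G\<^esub> gp (m * int k)) \<otimes>\<^bsub>G\<^esub> inv\<^bsub>G\<^esub> (gp (m * int k)) = inv\<^bsub>G\<^esub> (gp (n * int k)) \<otimes>\<^bsub>G\<^esub> (gp (n * int k) \<otimes>\<^bsub>G\<^esub> f) \<otimes>\<^bsub>G\<^esub> inv\<^bsub>G\<^esub> (gp (m * int k))"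
    using E by simp
  then have "inv\<^bsub>G\<^esub> (gp (n * int k)) \<otimes>\<^bsub>G\<^esub> f = f \<otimes>\<^bsub>G\<^esub> inv\<^bsub>G\<^esub> (gp (m * int k))"
    using f by (simp add: Gr.m_assoc Gr.cancel_l')
  then show ?thesis using k gp_neg[of "m * int k"] gp_neg[of "n * int k"] by simp
qed

definition C3c where "C3c = K1*((K1*\<delta>+nu+4*\<delta>) + 2*\<delta>) + nu + 2*\<delta> + (K1*(\<delta>+(K1*\<delta>+nu+4*\<delta>)) + nu + 2*\<delta>) + \<delta>"
definition C4c where "C4c = K1*(\<delta> + (K1*(\<delta>+(K1*\<delta>+nu+4*\<delta>)) + nu + 2*\<delta>)) + 2*nu + 3*\<delta> + (K1*\<delta>+nu+4*\<delta>) + K1*\<delta>"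
definition Rs where "Rs = C4c + 2*\<delta>"

definition bdd where "bdd h \<longleftrightarrow> (\<exists>R. \<forall>a\<in>A. dist (\<pi> (phi h a)) x0 \<le> R)"

lemma conjA: "h \<in> carrier G \<Longrightarrow> constricting_map Gam \<delta> (phi h ` A) (\<lambda>x. phi h (\<pi> (phi (inv\<^bsub>G\<^esub> h) x)))"
  by (rule conj_map[OF cm])

lemma C3c_nn: "C3c \<ge> 0"
proof -
  have k: "K1*\<delta> \<ge> 0" using K1_nonneg d by simp
  have "K1*((K1*\<delta>+nu+4*\<delta>) + 2*\<delta>) \<ge> 0" using K1_nonneg k d nu_ge by simp
  moreover have "K1*(\<delta>+(K1*\<delta>+nu+4*\<delta>)) \<ge> 0" using K1_nonneg k d nu_ge by simp
  ultimately show ?thesis unfolding C3c_def using nu_ge d by simp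
qed

lemma U1:
  assumes h: "h \<in> carrier G" and nb: "\<not> bdd h"
  shows "\<exists>i j. dist (phi (gp i) x0) (phi h (phi (gp j) x0)) \<le> Rs \<and> dist (phi (gp i) x0) x0 > R"
proof -
  define y2 where "y2 = phi h x0"
  have "\<exists>a\<in>A. \<not> dist (\<pi> (phi h a)) x0 \<le> max R 0 + \<delta> + dist (\<pi> y2) x0 + C3c"
    using nb unfolding bdd_def by blast
  then obtain a where a: "a \<in> A" "dist (\<pi> (phi h a)) x0 > max R 0 + \<delta> + dist (\<pi> y2) x0 + C3c"
    by (auto simp: not_le)
  define y1 where "y1 = phi h a"
  have "dist (\<pi> y1) x0 \<le> dist (\<pi> y1) (\<pi> y2) + dist (\<pi> y2) x0" by (rule dist_triangle)
  then have far: "dist (\<pi> y1) (\<pi> y2) > C3c" using a d unfolding y1_def by linarith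
  have y1A: "y1 \<in> phi h ` A" unfolding y1_def using a by blast
  have y2A: "y2 \<in> phi h ` A" unfolding y2_def using x0A by blast
  obtain b where b: "b \<in> phi h ` A" "dist (\<pi> y1) b \<le> C4c"
    using CC[OF cm conjA[OF h] d y1A y2A] far unfolding C3c_def C4c_def by blast
  obtain a2 where a2: "a2 \<in> A" "b = phi h a2" using b by blast
  obtain j where j: "dist a2 (phi (gp j) x0) \<le> \<delta>" using cob' a2(1) by blast
  have bj: "dist b (phi h (phi (gp j) x0)) \<le> \<delta>" using j a2 phi_dist[OF h] by simp
  obtain i where i: "dist (\<pi> y1) (phi (gp i) x0) \<le> \<delta>" using cob'[OF cm_in[OF cm]] by blast
  have "dist (phi (gp i) x0) (phi h (phi (gp j) x0)) \<le> dist (phi (gp i) x0) (\<pi> y1) + dist (\<pi> y1) b + dist b (phi h (phi (gp j) x0))"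
    using dist_triangle[of "phi (gp i) x0" "phi h (phi (gp j) x0)" b] dist_triangle[of "phi (gp i) x0" b "\<pi> y1"] by linarith
  then have c1: "dist (phi (gp i) x0) (phi h (phi (gp j) x0)) \<le> Rs" using i b(2) bj unfolding Rs_def by (simp add: dist_commute)
  have "dist (\<pi> y1) x0 \<le> dist (\<pi> y1) (phi (gp i) x0) + dist (phi (gp i) x0) x0" by (rule dist_triangle)
  then have c2: "dist (phi (gp i) x0) x0 > R" using i a(2) zero_le_dist[of "\<pi> y2" x0] unfolding y1_def
    using zero_le_dist[of "\<pi> y2" x0] C3c_nn max.cobounded1[of R 0] max.cobounded2[of 0 R] by linarith
  show ?thesis using c1 c2 by blast
qed

definition Fset where "Fset = {k \<in> carrier G. dist x0 (phi k x0) \<le> Rs}"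

lemma Fset_fin: "finite Fset"
  unfolding Fset_def using proper[unfolded proper_action_def, rule_format, of x0 Rs] .

lemma dist_conj3:
  assumes h: "h \<in> carrier G"
  shows "dist x0 (phi (inv\<^bsub>G\<^esub> (gp i) \<otimes>\<^bsub>G\<^esub> h \<otimes>\<^bsub>G\<^esub> gp j) x0) = dist (phi (gp i) x0) (phi h (phi (gp j) x0))"
proof -
  interpret Gr: group G by (rule grp)
  have c: "inv\<^bsub>G\<^esub> (gp i) \<in> carrier G" by simp
  have "phi (inv\<^bsub>G\<^esub> (gp i) \<otimes>\<^bsub>G\<^esub> h \<otimes>\<^bsub>G\<^esub> gp j) x0 = phi (inv\<^bsub>G\<^esub> (gp i)) (phi h (phi (gp j) x0))"
    using h c by (simp add: phi_mult)
  then have "dist x0 (phi (inv\<^bsub>G\<^esub> (gp i) \<otimes>\<^bsub>G\<^esub> h \<otimes>\<^bsub>G\<^esub> gp j) x0) = dist (phi (gp i) x0) (phi (gp i) (phi (inv\<^bsub>G\<^esub> (gp i)) (phi h (phi (gp j) x0))))"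
    using phi_dist[OF gp_closed[of i]] by simp
  then show ?thesis using phi_inv_r[OF gp_closed[of i]] by simp
qed

lemma U2:
  assumes h: "h \<in> carrier G" and nb: "\<not> bdd h"
  shows "\<exists>m n. m \<noteq> 0 \<and> h \<otimes>\<^bsub>G\<^esub> gp m \<otimes>\<^bsub>G\<^esub> inv\<^bsub>G\<^esub> h = gp n"
proof -
  interpret Gr: group G by (rule grp)
  define I where "I = {i. \<exists>j. dist (phi (gp i) x0) (phi h (phi (gp j) x0)) \<le> Rs}"
  have infI: "infinite I"
  proof
    assume fI: "finite I"
    then have "finite ((\<lambda>i. dist (phi (gp i) x0) x0) ` I)" by simp
    then obtain Bv where Bv: "\<forall>v\<in>(\<lambda>i. dist (phi (gp i) x0) x0) ` I. v \<le> Bv"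
      using bdd_above_finite unfolding bdd_above_def by blast
    obtain i j where ij: "dist (phi (gp i) x0) (phi h (phi (gp j) x0)) \<le> Rs" "dist (phi (gp i) x0) x0 > Bv"
      using U1[OF h nb] by blast
    have "i \<in> I" unfolding I_def using ij(1) by blast
    then have "dist (phi (gp i) x0) x0 \<le> Bv" using Bv by blast
    then show False using ij(2) by simp
  qed
  define J where "J i = (SOME j. dist (phi (gp i) x0) (phi h (phi (gp j) x0)) \<le> Rs)" for i
  have J: "i \<in> I \<Longrightarrow> dist (phi (gp i) x0) (phi h (phi (gp (J i)) x0)) \<le> Rs" for i
  proof -
    assume "i \<in> I"
    then have "\<exists>j. dist (phi (gp i) x0) (phi h (phi (gp j) x0)) \<le> Rs" unfolding I_def by simp
    then show ?thesis unfolding J_def by (rule someI_ex)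
  qed
  define f where "f i = inv\<^bsub>G\<^esub> (gp i) \<otimes>\<^bsub>G\<^esub> h \<otimes>\<^bsub>G\<^esub> gp (J i)" for i
  have fF: "f ` I \<subseteq> Fset"
  proof
    fix k assume "k \<in> f ` I"
    then obtain i where i: "i \<in> I" "k = f i" by blast
    have "k \<in> carrier G" using i h unfolding f_def by simp
    moreover have "dist x0 (phi k x0) \<le> Rs" using i J[of i] dist_conj3[OF h] unfolding f_def by simp
    ultimately show "k \<in> Fset" unfolding Fset_def by blast
  qed
  have "\<not> inj_on f I"
  proof
    assume "inj_on f I"
    then have "finite I" using finite_imageD finite_subset[OF fF Fset_fin] by blast
    then show False using infI by simp
  qed
  then obtain i i' where ii: "i \<in> I" "i' \<in> I" "i \<noteq> i'" "f i = f i'" unfolding inj_on_def by auto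
  define j where "j = J i"
  define j' where "j' = J i'"
  have e: "inv\<^bsub>G\<^esub> (gp i) \<otimes>\<^bsub>G\<^esub> h \<otimes>\<^bsub>G\<^esub> gp j = inv\<^bsub>G\<^esub> (gp i') \<otimes>\<^bsub>G\<^esub> h \<otimes>\<^bsub>G\<^esub> gp j'" using ii(4) unfolding f_def j_def j'_def .
  have L: "gp i \<otimes>\<^bsub>G\<^esub> (inv\<^bsub>G\<^esub> (gp i) \<otimes>\<^bsub>G\<^esub> h \<otimes>\<^bsub>G\<^esub> gp j) \<otimes>\<^bsub>G\<^esub> gp (- j') \<otimes>\<^bsub>G\<^esub> inv\<^bsub>G\<^esub> h = h \<otimes>\<^bsub>G\<^esub> gp (j - j') \<otimes>\<^bsub>G\<^esub> inv\<^bsub>G\<^esub> h"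
  proof -
    have "gp i \<otimes>\<^bsub>G\<^esub> (inv\<^bsub>G\<^esub> (gp i) \<otimes>\<^bsub>G\<^esub> h \<otimes>\<^bsub>G\<^esub> gp j) \<otimes>\<^bsub>G\<^esub> gp (- j') \<otimes>\<^bsub>G\<^esub> inv\<^bsub>G\<^esub> h = h \<otimes>\<^bsub>G\<^esub> (gp j \<otimes>\<^bsub>G\<^esub> gp (- j')) \<otimes>\<^bsub>G\<^esub> inv\<^bsub>G\<^esub> h"
      using h by (simp add: Gr.m_assoc Gr.cancel_l)
    also have "\<dots> = h \<otimes>\<^bsub>G\<^esub> gp (j - j') \<otimes>\<^bsub>G\<^esub> inv\<^bsub>G\<^esub> h" using gp_add[of j "- j'"] by simp
    finally show ?thesis .
  qed
  have R: "gp i \<otimes>\<^bsub>G\<^esub> (inv\<^bsub>G\<^esub> (gp i') \<otimes>\<^bsub>G\<^esub> h \<otimes>\<^bsub>G\<^esub> gp j') \<otimes>\<^bsub>G\<^esub> gp (- j') \<otimes>\<^bsub>G\<^esub> inv\<^bsub>G\<^esub> h = gp (i - i')"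
  proof -
    have "gp j' \<otimes>\<^bsub>G\<^esub> gp (- j') = \<one>\<^bsub>G\<^esub>" using gp_add[of j' "- j'"] by simp
    then have "gp i \<otimes>\<^bsub>G\<^esub> (inv\<^bsub>G\<^esub> (gp i') \<otimes>\<^bsub>G\<^esub> h \<otimes>\<^bsub>G\<^esub> gp j') \<otimes>\<^bsub>G\<^esub> gp (- j') \<otimes>\<^bsub>G\<^esub> inv\<^bsub>G\<^esub> h = gp i \<otimes>\<^bsub>G\<^esub> inv\<^bsub>G\<^esub> (gp i') \<otimes>\<^bsub>G\<^esub> (h \<otimes>\<^bsub>G\<^esub> inv\<^bsub>G\<^esub> h)"
      using h by (simp add: Gr.m_assoc)
    also have "\<dots> = gp i \<otimes>\<^bsub>G\<^esub> gp (- i')" using h gp_neg[of i'] by simp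
    also have "\<dots> = gp (i - i')" using gp_add[of i "- i'"] by simp
    finally show ?thesis .
  qed
  have eq: "h \<otimes>\<^bsub>G\<^esub> gp (j - j') \<otimes>\<^bsub>G\<^esub> inv\<^bsub>G\<^esub> h = gp (i - i')"
    using trans[OF sym[OF L[unfolded e]] R] .
  have "j - j' \<noteq> 0"
  proof
    assume "j - j' = 0"
    then have "gp (i - i') = \<one>\<^bsub>G\<^esub>" using eq h by simp
    then have "gp (i - i') = gp 0" by simp
    then have "i - i' = 0" by (rule gp_inj)
    then show False using ii(3) by simp
  qed
  then show ?thesis using eq by blast
qed

lemma E_inv:
  assumes h: "h \<in> carrier G" and m: "m \<noteq> 0" and e: "h \<otimes>\<^bsub>G\<^esub> gp m \<otimes>\<^bsub>G\<^esub> inv\<^bsub>G\<^esub> h = gp n"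
  shows "n \<noteq> 0 \<and> inv\<^bsub>G\<^esub> h \<otimes>\<^bsub>G\<^esub> gp n \<otimes>\<^bsub>G\<^esub> inv\<^bsub>G\<^esub> (inv\<^bsub>G\<^esub> h) = gp m"
proof -
  interpret Gr: group G by (rule grp)
  have "inv\<^bsub>G\<^esub> h \<otimes>\<^bsub>G\<^esub> gp n \<otimes>\<^bsub>G\<^esub> h = inv\<^bsub>G\<^esub> h \<otimes>\<^bsub>G\<^esub> (h \<otimes>\<^bsub>G\<^esub> gp m \<otimes>\<^bsub>G\<^esub> inv\<^bsub>G\<^esub> h) \<otimes>\<^bsub>G\<^esub> h" using e by simp
  also have "\<dots> = gp m" using h by (simp add: Gr.m_assoc Gr.cancel_l')
  finally have e2: "inv\<^bsub>G\<^esub> h \<otimes>\<^bsub>G\<^esub> gp n \<otimes>\<^bsub>G\<^esub> h = gp m" .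
  have "n \<noteq> 0"
  proof
    assume "n = 0"
    then have "gp m = gp 0" using e2 h by simp
    then have "m = 0" by (rule gp_inj)
    then show False using m by simp
  qed
  then show ?thesis using e2 h by simp
qed

lemma E_pos:
  assumes h: "h \<in> carrier G" and m: "m \<noteq> 0" and e: "h \<otimes>\<^bsub>G\<^esub> gp m \<otimes>\<^bsub>G\<^esub> inv\<^bsub>G\<^esub> h = gp n"
  shows "\<exists>m' n'. m' > 0 \<and> h \<otimes>\<^bsub>G\<^esub> gp m' = gp n' \<otimes>\<^bsub>G\<^esub> h"
proof -
  interpret Gr: group G by (rule grp)
  have "\<exists>m' n'. m' > 0 \<and> h \<otimes>\<^bsub>G\<^esub> gp m' \<otimes>\<^bsub>G\<^esub> inv\<^bsub>G\<^esub> h = gp n'"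
  proof (cases "m > 0")
    case True then show ?thesis using e by blast
  next
    case False
    have "inv\<^bsub>G\<^esub> (h \<otimes>\<^bsub>G\<^esub> gp m \<otimes>\<^bsub>G\<^esub> inv\<^bsub>G\<^esub> h) = h \<otimes>\<^bsub>G\<^esub> inv\<^bsub>G\<^esub> (gp m) \<otimes>\<^bsub>G\<^esub> inv\<^bsub>G\<^esub> h" using h by (simp add: Gr.conj_inv)
    then have "h \<otimes>\<^bsub>G\<^esub> gp (- m) \<otimes>\<^bsub>G\<^esub> inv\<^bsub>G\<^esub> h = gp (- n)" using e gp_neg[of m] gp_neg[of n] by simp
    moreover have "- m > 0" using False m by simp
    ultimately show ?thesis by blast
  qed
  then obtain m' n' where mn: "m' > 0" "h \<otimes>\<^bsub>G\<^esub> gp m' \<otimes>\<^bsub>G\<^esub> inv\<^bsub>G\<^esub> h = gp n'" by blast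
  have "h \<otimes>\<^bsub>G\<^esub> gp m' = gp n' \<otimes>\<^bsub>G\<^esub> h"
    using mn(2) h Gr.inv_solve_right'[of "gp n'" "h \<otimes>\<^bsub>G\<^esub> gp m'" h] by simp
  then show ?thesis using mn(1) by blast
qed

lemma letter_form:
  "letter_val G (gp N) (h \<otimes>\<^bsub>G\<^esub> gp N \<otimes>\<^bsub>G\<^esub> inv\<^bsub>G\<^esub> h) l =
     (if fst l then h \<otimes>\<^bsub>G\<^esub> gp (if snd l then N else - N) \<otimes>\<^bsub>G\<^esub> inv\<^bsub>G\<^esub> h else gp (if snd l then N else - N))"
  if h: "h \<in> carrier G" for h N
proof -
  interpret Gr: group G by (rule grp)
  have "inv\<^bsub>G\<^esub> (h \<otimes>\<^bsub>G\<^esub> gp N \<otimes>\<^bsub>G\<^esub> inv\<^bsub>G\<^esub> h) = h \<otimes>\<^bsub>G\<^esub> gp (- N) \<otimes>\<^bsub>G\<^esub> inv\<^bsub>G\<^esub> h"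
    using h gp_neg[of N] by (simp add: Gr.conj_inv)
  then show ?thesis unfolding letter_val_def Let_def using gp_neg[of N] by (cases l) auto
qed

lemma free_case:
  assumes h: "h \<in> carrier G" and bh: "bdd h" and bih: "bdd (inv\<^bsub>G\<^esub> h)"
  shows "has_free_subgroup_rank2 G"
proof -
  interpret Gr: group G by (rule grp)
  have hi: "inv\<^bsub>G\<^esub> h \<in> carrier G" using h by simp
  obtain R1 where R1: "\<forall>a\<in>A. dist (\<pi> (phi h a)) x0 \<le> R1" using bh unfolding bdd_def by blast
  obtain R2 where R2: "\<forall>a\<in>A. dist (\<pi> (phi (inv\<^bsub>G\<^esub> h) a)) x0 \<le> R2" using bih unfolding bdd_def by blast
  define Rb where "Rb = max R1 R2"
  have Rb1: "\<forall>a\<in>A. dist (\<pi> (phi h a)) x0 \<le> Rb" using R1 unfolding Rb_def by fastforce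
  have Rb2: "\<forall>a\<in>A. dist (\<pi> (phi (inv\<^bsub>G\<^esub> h) a)) x0 \<le> Rb" using R2 unfolding Rb_def by fastforce
  have "dist (\<pi> (phi h x0)) x0 \<le> Rb" using Rb1 x0A by blast
  then have Rb0: "Rb \<ge> 0" using zero_le_dist[of "\<pi> (phi h x0)" x0] by linarith
  define \<pi>2 where "\<pi>2 = (\<lambda>x. phi h (\<pi> (phi (inv\<^bsub>G\<^esub> h) x)))"
  have c2: "constricting_map Gam \<delta> (phi h ` A) \<pi>2" unfolding \<pi>2_def by (rule conjA[OF h])
  have b1: "\<forall>b\<in>phi h ` A. dist (\<pi> b) x0 \<le> Rb" using Rb1 by blast
  have b2: "\<forall>b\<in>A. dist (\<pi>2 b) (phi h x0) \<le> Rb" using Rb2 phi_dist[OF h] unfolding \<pi>2_def by simp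
  define K where "K = Rb + K1*(K1*\<delta>+nu+3*\<delta>) + K1*\<delta> + 2*nu + 4*\<delta>"
  have T: "dist (\<pi> x) x0 \<le> K \<or> dist (\<pi> (phi (inv\<^bsub>G\<^esub> h) x)) x0 \<le> K" for x
    using transverse[OF cm c2 d b1 b2, of x] phi_dist[OF h] unfolding \<pi>2_def K_def by simp
  have kd: "K1*\<delta> \<ge> 0" using K1_nonneg d by simp
  have kk: "K1*(K1*\<delta>+nu+3*\<delta>) \<ge> 0" using K1_nonneg kd d nu_ge by simp
  have KRb: "K \<ge> Rb" "K \<ge> \<delta>" unfolding K_def using kd kk nu_ge d Rb0 by auto
  define R where "R = Ceq + \<delta>"
  have Rd: "R \<ge> \<delta>" unfolding R_def Ceq_def using kd nu_ge d by simp
  obtain B1 where B1: "\<forall>i. dist x0 (phi (gp i) x0) \<le> 2*R \<longrightarrow> \<bar>i\<bar> \<le> B1" using bnd_pow by blast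
  obtain B2 where B2: "\<forall>i. dist x0 (phi (gp i) x0) \<le> K + R \<longrightarrow> \<bar>i\<bar> \<le> B2" using bnd_pow by blast
  define M where "M = max B1 B2 + 1"
  define N where "N = 2 * M"
  have MB: "M > B1" "M > B2" unfolding M_def by auto
  define Xs where "Xs s = {x. \<exists>i. (if s then i \<ge> M else i \<le> - M) \<and> dist (\<pi> x) (phi (gp i) x0) \<le> R}" for s
  have far: "dist (\<pi> x) x0 > K" if x: "x \<in> Xs s" for x s
  proof -
    obtain i where i: "if s then i \<ge> M else i \<le> - M" "dist (\<pi> x) (phi (gp i) x0) \<le> R" using x unfolding Xs_def by blast
    have "\<bar>i\<bar> \<ge> M" using i(1) by (cases s) auto
    then have "\<not> dist x0 (phi (gp i) x0) \<le> K + R" using B2 MB by force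
    moreover have "dist x0 (phi (gp i) x0) \<le> dist x0 (\<pi> x) + dist (\<pi> x) (phi (gp i) x0)" by (rule dist_triangle)
    ultimately show ?thesis using i(2) by (simp add: dist_commute)
  qed
  have disjX: False if "x \<in> Xs True" "x \<in> Xs False" for x
  proof -
    have "\<exists>i. i \<ge> M \<and> dist (\<pi> x) (phi (gp i) x0) \<le> R" using that(1) unfolding Xs_def by simp
    then obtain i where i: "i \<ge> M" "dist (\<pi> x) (phi (gp i) x0) \<le> R" by blast
    have "\<exists>j. j \<le> - M \<and> dist (\<pi> x) (phi (gp j) x0) \<le> R" using that(2) unfolding Xs_def by simp
    then obtain j where j: "j \<le> - M" "dist (\<pi> x) (phi (gp j) x0) \<le> R" by blast
    have "dist (phi (gp i) x0) (phi (gp j) x0) \<le> dist (phi (gp i) x0) (\<pi> x) + dist (\<pi> x) (phi (gp j) x0)" by (rule dist_triangle)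
    then have "dist x0 (phi (gp (j - i)) x0) \<le> 2*R" using i j dist_gp[of i x0 j] by (simp add: dist_commute)
    then have "\<bar>j - i\<bar> \<le> B1" using B1 by blast
    then show False using i(1) j(1) MB by linarith
  qed
  have stepX: "phi (gp (if s then N else - N)) x \<in> Xs s" if x: "x \<notin> Xs (\<not> s)" for x s
  proof -
    obtain i where i: "dist (\<pi> x) (phi (gp i) x0) \<le> \<delta>" using cob'[OF cm_in[OF cm]] by blast
    define c where "c = (if s then N else - N)"
    have ic: "if s then c + i \<ge> M else c + i \<le> - M"
    proof (cases s)
      case True
      have "\<not> i \<le> - M"
      proof
        assume "i \<le> - M" then have "x \<in> Xs False" unfolding Xs_def using i Rd by fastforce
        then show False using x True by simp
      qed
      then show ?thesis using True unfolding c_def N_def by simp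
    next
      case False
      have "\<not> i \<ge> M"
      proof
        assume "i \<ge> M" then have "x \<in> Xs True" unfolding Xs_def using i Rd by fastforce
        then show False using x False by simp
      qed
      then show ?thesis using False unfolding c_def N_def by simp
    qed
    have e1: "dist (\<pi> (phi (gp c) x)) (phi (gp c) (\<pi> x)) \<le> Ceq" by (rule equiv)
    have e2: "dist (phi (gp c) (\<pi> x)) (phi (gp (c + i)) x0) \<le> \<delta>"
      using i phi_dist[OF gp_closed[of c]] phi_gp_add[of c i x0] by simp
    have "dist (\<pi> (phi (gp c) x)) (phi (gp (c + i)) x0) \<le> R"
      using dist_triangle[of "\<pi> (phi (gp c) x)" "phi (gp (c + i)) x0" "phi (gp c) (\<pi> x)"] e1 e2
      unfolding R_def by linarith
    then show ?thesis using ic unfolding Xs_def c_def by blast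
  qed
  define S where "S l = (if fst l then {x. phi (inv\<^bsub>G\<^esub> h) x \<in> Xs (snd l)} else Xs (snd l))" for l :: "bool \<times> bool"
  define aa where "aa = gp N"
  define bb where "bb = h \<otimes>\<^bsub>G\<^esub> gp N \<otimes>\<^bsub>G\<^esub> inv\<^bsub>G\<^esub> h"
  have aa: "aa \<in> carrier G" unfolding aa_def by simp
  have bb: "bb \<in> carrier G" unfolding bb_def using h by simp
  have step: "phi (letter_val G aa bb l) x \<in> S l" if x: "x \<notin> S (fst l, \<not> snd l)" for l x
  proof (cases "fst l")
    case False
    have "phi (letter_val G aa bb l) x = phi (gp (if snd l then N else - N)) x"
      using letter_form[OF h, of N l] False unfolding aa_def bb_def by simp
    moreover have "x \<notin> Xs (\<not> snd l)" using x False unfolding S_def by simp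
    ultimately show ?thesis using stepX False unfolding S_def by simp
  next
    case True
    define c where "c = (if snd l then N else - N)"
    have "phi (letter_val G aa bb l) x = phi h (phi (gp c) (phi (inv\<^bsub>G\<^esub> h) x))"
      using letter_form[OF h, of N l] True h unfolding aa_def bb_def c_def by (simp add: phi_mult)
    then have "phi (inv\<^bsub>G\<^esub> h) (phi (letter_val G aa bb l) x) = phi (gp c) (phi (inv\<^bsub>G\<^esub> h) x)"
      using phi_inv_l[OF h] by simp
    moreover have "phi (inv\<^bsub>G\<^esub> h) x \<notin> Xs (\<not> snd l)" using x True unfolding S_def by simp
    ultimately show ?thesis using stepX True unfolding S_def c_def by simp
  qed
  have disj: False if "l \<noteq> l'" "x \<in> S l" "x \<in> S l'" for l l' x
  proof (cases "fst l = fst l'")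
    case True
    then have "snd l \<noteq> snd l'" using that(1) by (cases l, cases l') auto
    then show False
    proof (cases "fst l")
      case False
      then have "x \<in> Xs (snd l)" "x \<in> Xs (snd l')" using that(2,3) True unfolding S_def by auto
      then show False using disjX \<open>snd l \<noteq> snd l'\<close> by (cases "snd l") auto
    next
      case tl: True
      then have "phi (inv\<^bsub>G\<^esub> h) x \<in> Xs (snd l)" "phi (inv\<^bsub>G\<^esub> h) x \<in> Xs (snd l')" using that(2,3) True unfolding S_def by auto
      then show False using disjX \<open>snd l \<noteq> snd l'\<close> by (cases "snd l") auto
    qed
  next
    case False
    have "\<exists>s s'. x \<in> Xs s \<and> phi (inv\<^bsub>G\<^esub> h) x \<in> Xs s'"
    proof (cases "fst l")
      case True
      then show ?thesis using that(2,3) False unfolding S_def by auto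
    next
      case fl: False
      then show ?thesis using that(2,3) False unfolding S_def by auto
    qed
    then obtain s s' where "x \<in> Xs s" "phi (inv\<^bsub>G\<^esub> h) x \<in> Xs s'" by blast
    then show False using far T[of x] by force
  qed
  have base: "x0 \<notin> S l" for l
  proof
    assume a: "x0 \<in> S l"
    show False
    proof (cases "fst l")
      case False
      then have "x0 \<in> Xs (snd l)" using a unfolding S_def by simp
      then have "dist (\<pi> x0) x0 > K" by (rule far)
      moreover have "dist x0 (\<pi> x0) \<le> \<delta>" by (rule cm_near[OF cm x0A])
      ultimately show False using KRb by (simp add: dist_commute)
    next
      case True
      then have "phi (inv\<^bsub>G\<^esub> h) x0 \<in> Xs (snd l)" using a unfolding S_def by simp
      then have "dist (\<pi> (phi (inv\<^bsub>G\<^esub> h) x0)) x0 > K" by (rule far)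
      moreover have "dist (\<pi> (phi (inv\<^bsub>G\<^esub> h) x0)) x0 \<le> Rb" using Rb2 x0A by blast
      ultimately show False using KRb by simp
    qed
  qed
  have "free_basis2 G aa bb"
  proof (rule pingpong[OF aa bb, where S=S and p=x0])
    fix l x assume "x \<notin> S (fst l, \<not> snd l)" then show "phi (letter_val G aa bb l) x \<in> S l" by (rule step)
  next
    fix l l' x assume "l \<noteq> l'" "x \<in> S l" "x \<in> S l'" then show False by (rule disj)
  next
    fix l show "x0 \<notin> S l" by (rule base)
  qed
  then show ?thesis unfolding has_free_subgroup_rank2_def by blast
qed

lemma CE_main: "virtually_cyclic G \<or> has_free_subgroup_rank2 G"
proof (cases "\<exists>h\<in>carrier G. bdd h \<and> bdd (inv\<^bsub>G\<^esub> h)")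
  case True
  then show ?thesis using free_case by blast
next
  case False
  interpret Gr: group G by (rule grp)
  have nb: "\<not> bdd h \<or> \<not> bdd (inv\<^bsub>G\<^esub> h)" if "h \<in> carrier G" for h using False that by blast
  have E: "\<exists>m n. m \<noteq> 0 \<and> h \<otimes>\<^bsub>G\<^esub> gp m \<otimes>\<^bsub>G\<^esub> inv\<^bsub>G\<^esub> h = gp n" if h: "h \<in> carrier G" for h
  proof (cases "bdd h")
    case False then show ?thesis using U2[OF h] by blast
  next
    case True
    then have "\<not> bdd (inv\<^bsub>G\<^esub> h)" using nb[OF h] by blast
    then obtain m n where mn: "m \<noteq> 0" "inv\<^bsub>G\<^esub> h \<otimes>\<^bsub>G\<^esub> gp m \<otimes>\<^bsub>G\<^esub> inv\<^bsub>G\<^esub> (inv\<^bsub>G\<^esub> h) = gp n" using U2[of "inv\<^bsub>G\<^esub> h"] h by auto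
    have "n \<noteq> 0 \<and> inv\<^bsub>G\<^esub> (inv\<^bsub>G\<^esub> h) \<otimes>\<^bsub>G\<^esub> gp n \<otimes>\<^bsub>G\<^esub> inv\<^bsub>G\<^esub> (inv\<^bsub>G\<^esub> (inv\<^bsub>G\<^esub> h)) = gp m" using E_inv[of "inv\<^bsub>G\<^esub> h" m n] mn h by simp
    then show ?thesis using h by auto
  qed
  have C: "\<exists>i j. inv\<^bsub>G\<^esub> (gp i) \<otimes>\<^bsub>G\<^esub> h \<otimes>\<^bsub>G\<^esub> gp j \<in> Fset" if h: "h \<in> carrier G" for h
  proof (cases "bdd h")
    case False
    then obtain i j where ij: "dist (phi (gp i) x0) (phi h (phi (gp j) x0)) \<le> Rs" using U1[OF h, of 0] by blast
    have "inv\<^bsub>G\<^esub> (gp i) \<otimes>\<^bsub>G\<^esub> h \<otimes>\<^bsub>G\<^esub> gp j \<in> carrier G" using h by simp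
    then have "inv\<^bsub>G\<^esub> (gp i) \<otimes>\<^bsub>G\<^esub> h \<otimes>\<^bsub>G\<^esub> gp j \<in> Fset" using ij dist_conj3[OF h, of i j] unfolding Fset_def by simp
    then show ?thesis by blast
  next
    case True
    then have nbi: "\<not> bdd (inv\<^bsub>G\<^esub> h)" using nb[OF h] by blast
    have hi: "inv\<^bsub>G\<^esub> h \<in> carrier G" using h by simp
    obtain i j where ij: "dist (phi (gp i) x0) (phi (inv\<^bsub>G\<^esub> h) (phi (gp j) x0)) \<le> Rs" using U1[OF hi nbi, of 0] by blast
    have "dist (phi h (phi (gp i) x0)) (phi h (phi (inv\<^bsub>G\<^esub> h) (phi (gp j) x0))) \<le> Rs" using ij phi_dist[OF h] by simp
    then have "dist (phi (gp j) x0) (phi h (phi (gp i) x0)) \<le> Rs" using phi_inv_r[OF h] by (simp add: dist_commute)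
    moreover have "inv\<^bsub>G\<^esub> (gp j) \<otimes>\<^bsub>G\<^esub> h \<otimes>\<^bsub>G\<^esub> gp i \<in> carrier G" using h by simp
    ultimately have "inv\<^bsub>G\<^esub> (gp j) \<otimes>\<^bsub>G\<^esub> h \<otimes>\<^bsub>G\<^esub> gp i \<in> Fset" using dist_conj3[OF h, of j i] unfolding Fset_def by simp
    then show ?thesis by blast
  qed
  have FC: "Fset \<subseteq> carrier G" unfolding Fset_def by auto
  have EP: "\<exists>m n. m > 0 \<and> f \<otimes>\<^bsub>G\<^esub> gp m = gp n \<otimes>\<^bsub>G\<^esub> f" if f: "f \<in> Fset" for f
  proof -
    have fc: "f \<in> carrier G" using f FC by blast
    obtain m n where "m \<noteq> 0" "f \<otimes>\<^bsub>G\<^esub> gp m \<otimes>\<^bsub>G\<^esub> inv\<^bsub>G\<^esub> f = gp n" using E[OF fc] by blast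
    then show ?thesis using E_pos[OF fc] by blast
  qed
  define mf where "mf f = (SOME m. \<exists>n. m > 0 \<and> f \<otimes>\<^bsub>G\<^esub> gp m = gp n \<otimes>\<^bsub>G\<^esub> f)" for f
  define nf where "nf f = (SOME n. mf f > 0 \<and> f \<otimes>\<^bsub>G\<^esub> gp (mf f) = gp n \<otimes>\<^bsub>G\<^esub> f)" for f
  have mnf: "mf f > 0 \<and> f \<otimes>\<^bsub>G\<^esub> gp (mf f) = gp (nf f) \<otimes>\<^bsub>G\<^esub> f" if f: "f \<in> Fset" for f
  proof -
    have "\<exists>n. mf f > 0 \<and> f \<otimes>\<^bsub>G\<^esub> gp (mf f) = gp n \<otimes>\<^bsub>G\<^esub> f"
      unfolding mf_def by (rule someI_ex) (use EP[OF f] in blast)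
    then show ?thesis unfolding nf_def by (rule someI_ex)
  qed
  define H where "H = generate G {g}"
  have sub: "subgroup H G" unfolding H_def using g by (intro Gr.generate_is_subgroup) auto
  have HC: "H \<subseteq> carrier G" using sub by (rule subgroup.subset)
  have gpH: "gp k \<in> H" for k unfolding H_def gen by blast
  have incl': "H #>\<^bsub>G\<^esub> a \<in> (\<lambda>(f, r). H #>\<^bsub>G\<^esub> (f \<otimes>\<^bsub>G\<^esub> gp r)) ` (SIGMA f:Fset. {0..<mf f})"
    if a1: "a \<in> carrier G" for a
  proof -
    define Xc where "Xc = H #>\<^bsub>G\<^esub> a"
    have a: "a \<in> carrier G" "Xc = H #>\<^bsub>G\<^esub> a" using a1 unfolding Xc_def by auto
    obtain i j where f: "inv\<^bsub>G\<^esub> (gp i) \<otimes>\<^bsub>G\<^esub> a \<otimes>\<^bsub>G\<^esub> gp j \<in> Fset" using C[OF a(1)] by blast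
    define f where "f = inv\<^bsub>G\<^esub> (gp i) \<otimes>\<^bsub>G\<^esub> a \<otimes>\<^bsub>G\<^esub> gp j"
    have fF: "f \<in> Fset" using f unfolding f_def .
    have fc: "f \<in> carrier G" using fF FC by blast
    define m where "m = mf f"
    define n where "n = nf f"
    have m0: "m > 0" and fm: "f \<otimes>\<^bsub>G\<^esub> gp m = gp n \<otimes>\<^bsub>G\<^esub> f" using mnf[OF fF] unfolding m_def n_def by auto
    define q where "q = (- j) div m"
    define r where "r = (- j) mod m"
    have r: "r \<in> {0..<m}" unfolding r_def using m0 by simp
    have qr: "m * q + r = - j" unfolding q_def r_def by (rule mult_div_mod_eq)
    have "gp i \<otimes>\<^bsub>G\<^esub> f \<otimes>\<^bsub>G\<^esub> gp (- j) = gp i \<otimes>\<^bsub>G\<^esub> (inv\<^bsub>G\<^esub> (gp i) \<otimes>\<^bsub>G\<^esub> a \<otimes>\<^bsub>G\<^esub> gp j) \<otimes>\<^bsub>G\<^esub> gp (- j)" unfolding f_def by simp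
    also have "\<dots> = a \<otimes>\<^bsub>G\<^esub> (gp j \<otimes>\<^bsub>G\<^esub> gp (- j))" using a(1) by (simp add: Gr.m_assoc Gr.cancel_l)
    also have "gp j \<otimes>\<^bsub>G\<^esub> gp (- j) = \<one>\<^bsub>G\<^esub>" using gp_add[of j "- j"] by simp
    finally have a1: "a = gp i \<otimes>\<^bsub>G\<^esub> f \<otimes>\<^bsub>G\<^esub> gp (- j)" using a(1) by simp
    have "gp (- j) = gp (m * q) \<otimes>\<^bsub>G\<^esub> gp r" using gp_add[of "m * q" r] qr by simp
    then have "a = gp i \<otimes>\<^bsub>G\<^esub> (f \<otimes>\<^bsub>G\<^esub> gp (m * q)) \<otimes>\<^bsub>G\<^esub> gp r" using a1 fc by (simp add: Gr.m_assoc)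
    also have "f \<otimes>\<^bsub>G\<^esub> gp (m * q) = gp (n * q) \<otimes>\<^bsub>G\<^esub> f" by (rule gp_comm_pow[OF fc fm])
    finally have "a = gp i \<otimes>\<^bsub>G\<^esub> (gp (n * q) \<otimes>\<^bsub>G\<^esub> f) \<otimes>\<^bsub>G\<^esub> gp r" .
    also have "\<dots> = (gp i \<otimes>\<^bsub>G\<^esub> gp (n * q)) \<otimes>\<^bsub>G\<^esub> (f \<otimes>\<^bsub>G\<^esub> gp r)" using fc by (simp add: Gr.m_assoc)
    also have "gp i \<otimes>\<^bsub>G\<^esub> gp (n * q) = gp (i + n * q)" using gp_add by simp
    finally have a2: "a = gp (i + n * q) \<otimes>\<^bsub>G\<^esub> (f \<otimes>\<^bsub>G\<^esub> gp r)" .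
    have "H #>\<^bsub>G\<^esub> a = (H #>\<^bsub>G\<^esub> gp (i + n * q)) #>\<^bsub>G\<^esub> (f \<otimes>\<^bsub>G\<^esub> gp r)"
      unfolding a2 using HC fc by (simp add: Gr.coset_mult_assoc)
    also have "H #>\<^bsub>G\<^esub> gp (i + n * q) = H" using subgroup.rcos_const[OF sub grp gpH] .
    finally have "Xc = H #>\<^bsub>G\<^esub> (f \<otimes>\<^bsub>G\<^esub> gp r)" using a(2) by simp
    moreover have "(f, r) \<in> (SIGMA f:Fset. {0..<mf f})" using fF r unfolding m_def by simp
    ultimately show ?thesis unfolding Xc_def by force
  qed
  have incl: "RCOSETS G H \<subseteq> (\<lambda>(f, r). H #>\<^bsub>G\<^esub> (f \<otimes>\<^bsub>G\<^esub> gp r)) ` (SIGMA f:Fset. {0..<mf f})"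
    unfolding RCOSETS_def using incl' by blast
  have "finite (SIGMA f:Fset. {0..<mf f})" using Fset_fin by (intro finite_SigmaI) auto
  then have "finite ((RCOSETS G H))" using incl by (meson finite_imageI finite_subset)
  then have "virtually_cyclic G" unfolding virtually_cyclic_def H_def using g by blast
  then show ?thesis by blast
qed

end


theorem mainTheorem2:
  fixes \<mu> \<nu> :: real
    and G :: "('g, 'm) monoid_scheme"
    and \<phi> :: "'g \<Rightarrow> 'x::metric_space \<Rightarrow> 'x"
    and \<Gamma> :: "'x rpath set"
  assumes "path_system_group \<mu> \<nu> G \<phi> \<Gamma>"
    and "\<exists>g. constricting_element G \<phi> \<Gamma> g"
  shows "virtually_cyclic G \<or> has_free_subgroup_rank2 G"
proof -
  interpret PSG \<mu> \<nu> G \<phi> \<Gamma> by (rule PSG.intro[OF assms(1)])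
  obtain g where ce: "constricting_element G \<phi> \<Gamma> g" using assms(2) by blast
  then obtain \<delta> A where g: "g \<in> carrier G" "infinite_order G g" "\<delta> \<ge> 0"
    "\<forall>k\<in>generate G {g}. \<phi> k ` A \<subseteq> A" "constricting_set \<Gamma> \<delta> A"
    "\<forall>a\<in>A. \<forall>a'\<in>A. \<exists>k\<in>generate G {g}. dist a (\<phi> k a') \<le> \<delta>"
    unfolding constricting_element_def by blast
  obtain \<pi> where cm: "constricting_map \<Gamma> \<delta> A \<pi>" using g(5) unfolding constricting_set_def by blast
  have x0: "\<pi> undefined \<in> A" by (rule cm_in[OF cm])
  have "CE \<mu> \<nu> G \<phi> \<Gamma> g \<delta> A \<pi> (\<pi> undefined)"
    by (intro CE.intro PSG.intro CE_axioms.intro assms(1) g(1,2,3,4,6) cm x0)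
  then interpret CE \<mu> \<nu> G \<phi> \<Gamma> g \<delta> A \<pi> "\<pi> undefined" .
  show ?thesis by (rule CE_main)
qed

end
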